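(* Let $\mathbb{X}$ be a real reflexive Banach space, $\mathbb{Y}$ a real normed linear space, and $0\neq T\in\mathbb{K}(\mathbb{X},\mathbb{Y})$. Then the following are equivalent: (i) $T$ is a smooth point of $\mathbb{K}(\mathbb{X},\mathbb{Y})$. (ii) $M_T=\{\pm x_0\}$ for some $x_0\in S_{\mathbb{X}}$ and $Tx_0$ is a smooth point of $\mathbb{Y}$. (iii) For every $A\in\mathbb{K}(\mathbb{X},\mathbb{Y})$: $T\perp_B A$ if and only if for every semi-inner-product $[\cdot,\cdot]$ on $\mathbb{Y}$ compatible with the norm and every norming sequence $\{x_n\}$ for $T$, every subsequential limit of $\{[Ax_n,Tx_n]\}$ equals $0$.
   Context: All spaces are real. $\mathbb{K}(\mathbb{X},\mathbb{Y})$ is the space of compact linear operators with the operator norm; $S_{\mathbb{X}}$ is the unit sphere; $M_T=\{x\in S_{\mathbb{X}}:\|Tx\|=\|T\|\}$. A nonzero element $x$ of a normed space $\mathbb{Z}$ is smooth if there is a unique $f\in\mathbb{Z}^*$ with $\|f\|=1$ and $f(x)=\|x\|$. $x\perp_B y$ means $\|x+\lambda y\|\ge\|x\|$ for all $\lambda\in\mathbb{R}$. A norming sequence for $T$ is $\{x_n\}\subseteq S_{\mathbb{X}}$ with $\|Tx_n\|\to\|T\|$. A semi-inner-product on $\mathbb{Y}$ is a map $[\cdot,\cdot]:\mathbb{Y}\times\mathbb{Y}\to\mathbb{R}$, linear in the first variable, with $[x,x]>0$ for $x\ne0$, $|[x,y]|^2\le[x,x][y,y]$, $[x,\alpha y]=\alpha[x,y]$;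 compatible with the norm means $[x,x]=\|x\|^2$. *)

theory Defs
  imports "HOL-Analysis.Analysis"
begin

definition reflexive_space :: "'a::real_normed_vector itself \<Rightarrow> bool" where
  "reflexive_space _ \<longleftrightarrow>
     (\<forall>\<phi> :: ('a \<Rightarrow>\<^sub>L real) \<Rightarrow>\<^sub>L real. \<exists>x::'a. \<forall>f. blinfun_apply \<phi> f = blinfun_apply f x)"

definition compact_ops :: "('a::real_normed_vector \<Rightarrow>\<^sub>L 'b::real_normed_vector) set" where
  "compact_ops = {T. compact (closure (blinfun_apply T ` ball 0 1))}"

definition support_functional_on :: "'z::real_normed_vector set \<Rightarrow> 'z \<Rightarrow> ('z \<Rightarrow> real) \<Rightarrow> bool" where
  "support_functional_on S x f \<longleftrightarrow>
     (\<forall>u\<in>S. \<forall>v\<in>S. f (u + v) = f u + f v) \<and>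
     (\<forall>u\<in>S. \<forall>c. f (c *\<^sub>R u) = c * f u) \<and>
     (\<exists>C. \<forall>u\<in>S. \<bar>f u\<bar> \<le> C * norm u) \<and>
     (SUP u\<in>{u\<in>S. norm u = 1}. \<bar>f u\<bar>) = 1 \<and>
     f x = norm x"

definition smooth_point_in :: "'z::real_normed_vector set \<Rightarrow> 'z \<Rightarrow> bool" where
  "smooth_point_in S x \<longleftrightarrow> x \<in> S \<and> x \<noteq> 0 \<and>
     (\<exists>f. support_functional_on S x f) \<and>
     (\<forall>f g. support_functional_on S x f \<longrightarrow> support_functional_on S x g \<longrightarrow> (\<forall>u\<in>S. f u = g u))"

definition birkhoff_orth :: "'z::real_normed_vector \<Rightarrow> 'z \<Rightarrow> bool" where
  "birkhoff_orth x y \<longleftrightarrow> (\<forall>t::real. norm (x + t *\<^sub>R y) \<ge> norm x)"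

definition norm_attain_set :: "('a::real_normed_vector \<Rightarrow>\<^sub>L 'b::real_normed_vector) \<Rightarrow> 'a set" where
  "norm_attain_set T = {x. norm x = 1 \<and> norm (T x) = norm T}"

definition norming_seq :: "('a::real_normed_vector \<Rightarrow>\<^sub>L 'b::real_normed_vector) \<Rightarrow> (nat \<Rightarrow> 'a) \<Rightarrow> bool" where
  "norming_seq T xs \<longleftrightarrow> (\<forall>n. norm (xs n) = 1) \<and> (\<lambda>n. norm (T (xs n))) \<longlonglongrightarrow> norm T"

definition compatible_sip :: "('b::real_normed_vector \<Rightarrow> 'b \<Rightarrow> real) \<Rightarrow> bool" where
  "compatible_sip s \<longleftrightarrow>
     (\<forall>x y z. s (x + y) z = s x z + s y z) \<and>
     (\<forall>c x y. s (c *\<^sub>R x) y = c * s x y) \<and>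
     (\<forall>x. x \<noteq> 0 \<longrightarrow> s x x > 0) \<and>
     (\<forall>x y. (s x y)\<^sup>2 \<le> s x x * s y y) \<and>
     (\<forall>c x y. s x (c *\<^sub>R y) = c * s x y) \<and>
     (\<forall>x. s x x = (norm x)\<^sup>2)"

definition subseq_limit :: "(nat \<Rightarrow> real) \<Rightarrow> real \<Rightarrow> bool" where
  "subseq_limit a l \<longleftrightarrow> (\<exists>r. strict_mono r \<and> (a \<circ> r) \<longlonglongrightarrow> l)"

end

theory Submission
  imports Defs
begin


lemma cluster_exists:
  fixes h :: "nat \<Rightarrow> 'i \<Rightarrow> real"
  assumes b: "\<And>n i. \<bar>h n i\<bar> \<le> b i"
  shows "\<exists>H. \<forall>F e N. finite F \<longrightarrow> e > 0 \<longrightarrow> (\<exists>n\<ge>N. \<forall>i\<in>F. \<bar>h n i - H i\<bar> < e)"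
proof -
  define K where "K = PiE UNIV (\<lambda>i. {-b i..b i})"
  have "compactin (product_topology (\<lambda>i. euclidean) UNIV) K"
    unfolding K_def compactin_PiE by auto
  hence cK: "compact K" by (simp add: euclidean_product_topology)
  have ev: "eventually (\<lambda>x. x \<in> K) (filtermap h sequentially)"
  proof -
    have "\<forall>n. h n \<in> K" using b by (auto simp: K_def PiE_iff abs_le_iff) (metis minus_le_iff)
    thus ?thesis by (simp add: eventually_filtermap)
  qed
  have nb: "filtermap h sequentially \<noteq> bot" by (simp add: filtermap_bot_iff)
  from cK[unfolded compact_filter, rule_format, OF nb ev]
  obtain H where H: "inf (nhds H) (filtermap h sequentially) \<noteq> bot" by blast
  show ?thesis
  proof (rule exI[of _ H], intro allI impI, rule ccontr)
    fix F :: "'i set" and e :: real and N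
    assume F: "finite F" "e > 0" and no: "\<not> (\<exists>n\<ge>N. \<forall>i\<in>F. \<bar>h n i - H i\<bar> < e)"
    define U where "U = (\<Inter>i\<in>F. (\<lambda>g. g i) -` ball (H i) e)"
    have "open ((\<lambda>g. g i) -` ball (H i) e)" for i
    proof -
      have "continuous_on UNIV (\<lambda>g::'i\<Rightarrow>real. g i)" by (rule continuous_on_product_coordinates)
      thus ?thesis using continuous_on_open_vimage[of UNIV "\<lambda>g::'i\<Rightarrow>real. g i"] by auto
    qed
    hence "open U" unfolding U_def using F by (intro open_INT) auto
    moreover have "H \<in> U" using F by (auto simp: U_def)
    ultimately have e1: "eventually (\<lambda>g. g \<in> U) (nhds H)" by (rule eventually_nhds_in_open)
    have e2: "eventually (\<lambda>g. g \<notin> U) (filtermap h sequentially)"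
      unfolding eventually_filtermap eventually_sequentially
      using no by (auto simp: U_def dist_real_def abs_minus_commute)
    have "eventually (\<lambda>g. False) (inf (nhds H) (filtermap h sequentially))"
      using eventually_inf[of "\<lambda>g. False" "nhds H" "filtermap h sequentially"] e1 e2 by blast
    thus False using H by (simp only: eventually_False)
  qed
qed




definition hbg :: "'a::real_normed_vector \<Rightarrow> ('a \<times> real) set \<Rightarrow> bool" where
  "hbg y G \<longleftrightarrow> (0,0) \<in> G \<and> (\<forall>u r v s. (u,r)\<in>G \<longrightarrow> (v,s)\<in>G \<longrightarrow> (u+v, r+s) \<in> G)
    \<and> (\<forall>u r c. (u,r)\<in>G \<longrightarrow> (c *\<^sub>R u, c*r) \<in> G) \<and> (\<forall>u r s. (u,r)\<in>G \<longrightarrow> (u,s)\<in>G \<longrightarrow> r=s)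
    \<and> (\<forall>u r. (u,r)\<in>G \<longrightarrow> r \<le> norm u) \<and> (y, norm y) \<in> G"

lemma hbgD:
  assumes "hbg y G"
  shows "(0,0) \<in> G" "\<And>u r v s. (u,r)\<in>G \<Longrightarrow> (v,s)\<in>G \<Longrightarrow> (u+v, r+s) \<in> G"
    "\<And>u r c. (u,r)\<in>G \<Longrightarrow> (c *\<^sub>R u, c*r) \<in> G" "\<And>u r s. (u,r)\<in>G \<Longrightarrow> (u,s)\<in>G \<Longrightarrow> r=s"
    "\<And>u r. (u,r)\<in>G \<Longrightarrow> r \<le> norm u" "(y, norm y) \<in> G"
  using assms unfolding hbg_def by blast+

lemma hbg_ext:
  assumes M: "hbg y M" and v: "\<forall>r. (v,r) \<notin> M"
  shows "\<exists>G. hbg y G \<and> M \<subset> G"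
proof -
  have add: "\<And>u r w s. (u,r)\<in>M \<Longrightarrow> (w,s)\<in>M \<Longrightarrow> (u+w, r+s) \<in> M"
   and sc: "\<And>u r c. (u,r)\<in>M \<Longrightarrow> (c *\<^sub>R u, c*r) \<in> M"
   and fn: "\<And>u r s. (u,r)\<in>M \<Longrightarrow> (u,s)\<in>M \<Longrightarrow> r=s"
   and dom: "\<And>u r. (u,r)\<in>M \<Longrightarrow> r \<le> norm u"
   and z: "(0,0) \<in> M" and yy: "(y, norm y) \<in> M"
    using hbgD[OF M] by blast+
  define L where "L = {r - norm (m - v) | m r. (m,r)\<in>M}"
  have key: "r1 - norm (m1 - v) \<le> norm (m2 + v) - r2" if "(m1,r1)\<in>M" "(m2,r2)\<in>M" for m1 r1 m2 r2
  proof -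
    have "r1 + r2 \<le> norm (m1 + m2)" using dom[OF add[OF that]] .
    also have "\<dots> = norm ((m1 - v) + (m2 + v))" by (simp add: algebra_simps)
    also have "\<dots> \<le> norm (m1 - v) + norm (m2 + v)" by (rule norm_triangle_ineq)
    finally show ?thesis by simp
  qed
  define c where "c = Sup L"
  have Lne: "L \<noteq> {}" using z by (auto simp: L_def)
  have bdd: "bdd_above L"
  proof (rule bdd_aboveI[of _ "norm v"])
    fix x assume "x \<in> L"
    then obtain m r where "(m,r)\<in>M" "x = r - norm (m - v)" unfolding L_def by blast
    thus "x \<le> norm v" using key[OF _ z, of m r] by simp
  qed
  have c1: "r - norm (m - v) \<le> c" if "(m,r)\<in>M" for m r
    unfolding c_def by (rule cSup_upper[OF _ bdd]) (use that in \<open>auto simp: L_def\<close>)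
  have c2: "c \<le> norm (m + v) - r" if "(m,r)\<in>M" for m r
    unfolding c_def by (rule cSup_least[OF Lne]) (use key that in \<open>auto simp: L_def\<close>)
  define G where "G = {(m + a *\<^sub>R v, r + a*c) | m r a. (m,r)\<in>M}"
  have "hbg y G"
    unfolding hbg_def
  proof (intro conjI allI impI)
    show "(0,0) \<in> G" unfolding G_def using z by force
    show "(y, norm y) \<in> G" unfolding G_def using yy by force
  next
    fix u r w s assume "(u,r)\<in>G" "(w,s)\<in>G"
    then obtain m1 r1 a1 m2 r2 a2 where "(m1,r1)\<in>M" "(m2,r2)\<in>M"
      "u = m1 + a1 *\<^sub>R v" "r = r1 + a1 * c" "w = m2 + a2 *\<^sub>R v" "s = r2 + a2 * c"
      unfolding G_def by blast
    thus "(u+w, r+s) \<in> G" unfolding G_def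
      by (intro CollectI exI[of _ "m1+m2"] exI[of _ "r1+r2"] exI[of _ "a1+a2"])
         (auto intro: add simp: algebra_simps)
  next
    fix u r and d :: real assume "(u,r)\<in>G"
    then obtain m1 r1 a1 where "(m1,r1)\<in>M" "u = m1 + a1 *\<^sub>R v" "r = r1 + a1 * c"
      unfolding G_def by blast
    thus "(d *\<^sub>R u, d*r) \<in> G" unfolding G_def
      by (intro CollectI exI[of _ "d *\<^sub>R m1"] exI[of _ "d*r1"] exI[of _ "d*a1"])
         (auto intro: sc simp: algebra_simps)
  next
    fix u r s assume "(u,r)\<in>G" "(u,s)\<in>G"
    then obtain m1 r1 a1 m2 r2 a2 where h: "(m1,r1)\<in>M" "(m2,r2)\<in>M"
      "u = m1 + a1 *\<^sub>R v" "r = r1 + a1 * c" "u = m2 + a2 *\<^sub>R v" "s = r2 + a2 * c"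
      unfolding G_def by blast
    have d: "(m1 - m2, r1 - r2) \<in> M" using add[OF h(1) sc[OF h(2), of "-1"]] by simp
    have "a1 = a2"
    proof (rule ccontr)
      assume ne: "a1 \<noteq> a2"
      have "m1 - m2 = (a2 - a1) *\<^sub>R v" using h(3,5) by (simp add: algebra_simps)
      hence "v = (1/(a2-a1)) *\<^sub>R (m1 - m2)" using ne by simp
      thus False using sc[OF d, of "1/(a2-a1)"] v by metis
    qed
    hence "m1 = m2" using h by simp
    hence "r1 = r2" using fn h by blast
    thus "r = s" using h \<open>a1 = a2\<close> by simp
  next
    fix u r assume "(u,r)\<in>G"
    then obtain m a r1 where h: "(m,r1)\<in>M" "u = m + a *\<^sub>R v" "r = r1 + a * c"
      unfolding G_def by blast
    show "r \<le> norm u"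
    proof (cases a "0::real" rule: linorder_cases)
      case equal thus ?thesis using h dom by simp
    next
      case greater
      have hm: "((1/a) *\<^sub>R m, (1/a)*r1) \<in> M" by (rule sc[OF h(1)])
      have "c \<le> norm ((1/a) *\<^sub>R m + v) - (1/a)*r1" by (rule c2[OF hm])
      hence "a * c \<le> a * (norm ((1/a) *\<^sub>R m + v) - (1/a)*r1)" using greater by simp
      also have "\<dots> = norm (a *\<^sub>R ((1/a) *\<^sub>R m + v)) - r1" using greater
        by (simp add: right_diff_distrib)
      also have "a *\<^sub>R ((1/a) *\<^sub>R m + v) = u" using greater h by (simp add: algebra_simps)
      finally show ?thesis using h by simp
    next
      case less
      define b where "b = -a"
      have b: "b > 0" using less by (simp add: b_def)
      have hm: "((1/b) *\<^sub>R m, (1/b)*r1) \<in> M" by (rule sc[OF h(1)])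
      have "(1/b)*r1 - norm ((1/b) *\<^sub>R m - v) \<le> c" by (rule c1[OF hm])
      hence "b * ((1/b)*r1 - norm ((1/b) *\<^sub>R m - v)) \<le> b * c" using b by simp
      moreover have "b * ((1/b)*r1 - norm ((1/b) *\<^sub>R m - v)) = r1 - norm (b *\<^sub>R ((1/b) *\<^sub>R m - v))"
        using b by (simp add: right_diff_distrib)
      moreover have "b *\<^sub>R ((1/b) *\<^sub>R m - v) = u" using b h by (simp add: algebra_simps b_def)
      ultimately have "r1 - norm u \<le> b * c" by simp
      thus ?thesis using h unfolding b_def by simp
    qed
  qed
  moreover have "M \<subseteq> G"
  proof
    fix p assume "p \<in> M"
    moreover obtain m r where "p = (m,r)" by fastforce
    ultimately show "p \<in> G" unfolding G_def
      by (intro CollectI exI[of _ m] exI[of _ r] exI[of _ 0]) simp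
  qed
  moreover have "(v, c) \<in> G" unfolding G_def
    by (intro CollectI exI[of _ 0] exI[of _ 0] exI[of _ 1]) (simp add: z)
  ultimately show ?thesis using v by blast
qed

lemma hahn_banach_norm:
  fixes y :: "'a::real_normed_vector"
  shows "\<exists>f. bounded_linear f \<and> (\<forall>u. \<bar>f u\<bar> \<le> norm u) \<and> f y = norm y"
proof -
  define A where "A = {G. hbg y G}"
  define G0 where "G0 = {(a *\<^sub>R y, a * norm y) | a. True}"
  have G0: "hbg y G0" unfolding hbg_def G0_def
  proof (intro conjI allI impI)
    show "(0,0) \<in> {(a *\<^sub>R y, a * norm y) | a. True}" by (intro CollectI exI[of _ 0]) simp
    show "(y, norm y) \<in> {(a *\<^sub>R y, a * norm y) | a. True}" by (intro CollectI exI[of _ 1]) simp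
  next
    fix u r v s assume "(u,r) \<in> {(a *\<^sub>R y, a * norm y) | a. True}" "(v,s) \<in> {(a *\<^sub>R y, a * norm y) | a. True}"
    then obtain a b where "u = a *\<^sub>R y" "r = a * norm y" "v = b *\<^sub>R y" "s = b * norm y" by blast
    thus "(u+v, r+s) \<in> {(a *\<^sub>R y, a * norm y) | a. True}"
      by (intro CollectI exI[of _ "a+b"]) (simp add: algebra_simps)
  next
    fix u r and c :: real assume "(u,r) \<in> {(a *\<^sub>R y, a * norm y) | a. True}"
    then obtain a where "u = a *\<^sub>R y" "r = a * norm y" by blast
    thus "(c *\<^sub>R u, c*r) \<in> {(a *\<^sub>R y, a * norm y) | a. True}"
      by (intro CollectI exI[of _ "c*a"]) simp
  next
    fix u r s assume "(u,r) \<in> {(a *\<^sub>R y, a * norm y) | a. True}" "(u,s) \<in> {(a *\<^sub>R y, a * norm y) | a. True}"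
    then obtain a b where h: "u = a *\<^sub>R y" "r = a * norm y" "u = b *\<^sub>R y" "s = b * norm y" by blast
    show "r = s"
    proof (cases "y = 0")
      case True thus ?thesis using h by simp
    next
      case False
      hence "a = b" using h by (metis scaleR_cancel_right)
      thus ?thesis using h by simp
    qed
  next
    fix u r assume "(u,r) \<in> {(a *\<^sub>R y, a * norm y) | a. True}"
    then obtain a where "u = a *\<^sub>R y" "r = a * norm y" by blast
    thus "r \<le> norm u" by (simp add: mult_right_mono)
  qed
  have "\<forall>C\<in>chains A. \<exists>U\<in>A. \<forall>X\<in>C. X \<subseteq> U"
  proof
    fix C assume C: "C \<in> chains A"
    show "\<exists>U\<in>A. \<forall>X\<in>C. X \<subseteq> U"
    proof (cases "C = {}")
      case True thus ?thesis using G0 by (auto simp: A_def)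
    next
      case False
      have CA: "\<And>X. X \<in> C \<Longrightarrow> hbg y X" using chainsD2[OF C] by (auto simp: A_def)
      have two: "\<exists>X\<in>C. (u,r)\<in>X \<and> (v,s)\<in>X" if "(u,r)\<in>\<Union>C" "(v,s)\<in>\<Union>C" for u r v s
        using that chainsD[OF C] by blast
      have "hbg y (\<Union>C)" unfolding hbg_def
      proof (intro conjI allI impI)
        obtain X where X: "X \<in> C" using False by blast
        show "(0,0) \<in> \<Union>C" using X hbgD(1)[OF CA[OF X]] by blast
        show "(y, norm y) \<in> \<Union>C" using X hbgD(6)[OF CA[OF X]] by blast
      next
        fix u r v s assume "(u,r)\<in>\<Union>C" "(v,s)\<in>\<Union>C"
        then obtain X where "X\<in>C" "(u,r)\<in>X" "(v,s)\<in>X" using two by blast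
        thus "(u+v, r+s) \<in> \<Union>C" using hbgD(2)[OF CA[of X]] by blast
      next
        fix u r and c :: real assume "(u,r)\<in>\<Union>C"
        then obtain X where "X\<in>C" "(u,r)\<in>X" by blast
        thus "(c *\<^sub>R u, c*r) \<in> \<Union>C" using hbgD(3)[OF CA[of X]] by blast
      next
        fix u r s assume "(u,r)\<in>\<Union>C" "(u,s)\<in>\<Union>C"
        then obtain X where "X\<in>C" "(u,r)\<in>X" "(u,s)\<in>X" using two by blast
        thus "r = s" using hbgD(4)[OF CA[of X]] by blast
      next
        fix u r assume "(u,r)\<in>\<Union>C"
        then obtain X where "X\<in>C" "(u,r)\<in>X" by blast
        thus "r \<le> norm u" using hbgD(5)[OF CA[of X]] by blast
      qed
      thus ?thesis by (auto simp: A_def)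
    qed
  qed
  from Zorn_Lemma2[OF this] obtain M where M: "hbg y M" and mx: "\<And>X. hbg y X \<Longrightarrow> M \<subseteq> X \<Longrightarrow> X = M"
    by (auto simp: A_def)
  have tot: "\<exists>r. (v,r)\<in>M" for v
  proof (rule ccontr)
    assume "\<not> ?thesis"
    then obtain G where "hbg y G" "M \<subset> G" using hbg_ext[OF M] by blast
    thus False using mx by blast
  qed
  have add: "\<And>u r w s. (u,r)\<in>M \<Longrightarrow> (w,s)\<in>M \<Longrightarrow> (u+w, r+s) \<in> M"
   and sc: "\<And>u r c. (u,r)\<in>M \<Longrightarrow> (c *\<^sub>R u, c*r) \<in> M"
   and fn: "\<And>u r s. (u,r)\<in>M \<Longrightarrow> (u,s)\<in>M \<Longrightarrow> r=s"
   and dom: "\<And>u r. (u,r)\<in>M \<Longrightarrow> r \<le> norm u"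
   and yy: "(y, norm y) \<in> M"
    using hbgD[OF M] by blast+
  define f where "f v = (THE r. (v,r)\<in>M)" for v
  have fM: "(v, f v) \<in> M" for v
  proof -
    obtain r where "(v,r)\<in>M" using tot by blast
    moreover hence "f v = r" unfolding f_def using fn by blast
    ultimately show ?thesis by simp
  qed
  have fe: "(v,r)\<in>M \<Longrightarrow> f v = r" for v r using fn fM by blast
  have fadd: "f (u + v) = f u + f v" for u v using fe[OF add[OF fM fM]] .
  have fsc: "f (c *\<^sub>R u) = c * f u" for c u using fe[OF sc[OF fM]] .
  have fle: "f u \<le> norm u" for u using dom[OF fM] .
  have fab: "\<bar>f u\<bar> \<le> norm u" for u
    using fle[of u] fle[of "-u"] fsc[of "-1" u] by simp
  have "bounded_linear f"
    by (rule bounded_linear_intro[where K=1]) (use fadd fsc fab in auto)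
  moreover have "f y = norm y" using fe[OF yy] .
  ultimately show ?thesis using fab by blast
qed




definition is_supp :: "'b::real_normed_vector \<Rightarrow> ('b \<Rightarrow> real) \<Rightarrow> bool" where
  "is_supp y f \<longleftrightarrow> bounded_linear f \<and> (\<forall>u. \<bar>f u\<bar> \<le> norm u) \<and> f y = norm y"

definition ssupp :: "'z::real_normed_vector set \<Rightarrow> 'z \<Rightarrow> ('z \<Rightarrow> real) \<Rightarrow> bool" where
  "ssupp S x f \<longleftrightarrow> (\<forall>u\<in>S. \<forall>v\<in>S. f (u + v) = f u + f v) \<and> (\<forall>u\<in>S. \<forall>c. f (c *\<^sub>R u) = c * f u)
     \<and> (\<forall>u\<in>S. \<bar>f u\<bar> \<le> norm u) \<and> f x = norm x"

lemma hb: "\<exists>f. is_supp y f"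
  using hahn_banach_norm[of y] unfolding is_supp_def by blast

lemma is_supp_lin:
  assumes "is_supp y f"
  shows "f (u + v) = f u + f v" "f (c *\<^sub>R u) = c * f u" "f (- u) = - f u" "f (u - v) = f u - f v"
    "f 0 = 0"
proof -
  have l: "linear f" using assms bounded_linear.linear unfolding is_supp_def by blast
  show "f (u + v) = f u + f v" using linear_add[OF l] .
  show "f (c *\<^sub>R u) = c * f u" using linear_scale[OF l] by simp
  show "f (- u) = - f u" using linear_neg[OF l] .
  show "f (u - v) = f u - f v" using linear_diff[OF l] .
  show "f 0 = 0" using linear_0[OF l] .
qed

lemma is_supp_bound: "is_supp y f \<Longrightarrow> \<bar>f u\<bar> \<le> norm u"
  and is_supp_val: "is_supp y f \<Longrightarrow> f y = norm y"
  unfolding is_supp_def by blast+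

lemma supp_equiv:
  assumes sc: "\<And>u c. u \<in> S \<Longrightarrow> c *\<^sub>R u \<in> S" and x: "x \<in> S" "x \<noteq> 0"
  shows "support_functional_on S x f \<longleftrightarrow> ssupp S x f"
proof
  assume h: "support_functional_on S x f"
  then obtain C where C: "\<forall>u\<in>S. \<bar>f u\<bar> \<le> C * norm u" unfolding support_functional_on_def by blast
  have hs: "(\<forall>u\<in>S. \<forall>v\<in>S. f (u + v) = f u + f v)" "(\<forall>u\<in>S. \<forall>c. f (c *\<^sub>R u) = c * f u)"
    "(SUP u\<in>{u\<in>S. norm u = 1}. \<bar>f u\<bar>) = 1" "f x = norm x"
    using h unfolding support_functional_on_def by blast+
  have bdd: "bdd_above ((\<lambda>u. \<bar>f u\<bar>) ` {u\<in>S. norm u = 1})"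
    using C by (intro bdd_aboveI[of _ C]) auto
  have "\<bar>f u\<bar> \<le> norm u" if u: "u \<in> S" for u
  proof (cases "u = 0")
    case True
    thus ?thesis using hs(2) u by (metis abs_zero mult_zero_left norm_zero order_refl scaleR_zero_left)
  next
    case False
    let ?e = "(1 / norm u) *\<^sub>R u"
    have e: "?e \<in> {u\<in>S. norm u = 1}" using sc[OF u] False by simp
    have "\<bar>f ?e\<bar> \<le> 1" using cSUP_upper[OF e bdd] hs(3) by simp
    moreover have "f ?e = f u / norm u" using hs(2) u by simp
    ultimately show ?thesis using False by (simp add: divide_le_eq)
  qed
  thus "ssupp S x f" using hs unfolding ssupp_def by blast
next
  assume h: "ssupp S x f"
  have hs: "(\<forall>u\<in>S. \<forall>v\<in>S. f (u + v) = f u + f v)" "(\<forall>u\<in>S. \<forall>c. f (c *\<^sub>R u) = c * f u)"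
    "\<forall>u\<in>S. \<bar>f u\<bar> \<le> norm u" "f x = norm x"
    using h unfolding ssupp_def by blast+
  let ?e = "(1 / norm x) *\<^sub>R x"
  have e: "?e \<in> {u\<in>S. norm u = 1}" using sc[OF x(1)] x by simp
  have fe: "\<bar>f ?e\<bar> = 1" using hs(2) hs(4) x by simp
  have "(SUP u\<in>{u\<in>S. norm u = 1}. \<bar>f u\<bar>) = 1"
  proof (rule antisym)
    show "(SUP u\<in>{u\<in>S. norm u = 1}. \<bar>f u\<bar>) \<le> 1"
      by (rule cSUP_least) (use e hs(3) in auto)
    have "bdd_above ((\<lambda>u. \<bar>f u\<bar>) ` {u\<in>S. norm u = 1})"
      using hs(3) by (intro bdd_aboveI[of _ 1]) auto
    from cSUP_upper[OF e this] fe show "1 \<le> (SUP u\<in>{u\<in>S. norm u = 1}. \<bar>f u\<bar>)" by simp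
  qed
  moreover have "\<exists>C. \<forall>u\<in>S. \<bar>f u\<bar> \<le> C * norm u" using hs(3) by (intro exI[of _ 1]) simp
  ultimately show "support_functional_on S x f" using hs unfolding support_functional_on_def by blast
qed

lemma ssupp_UNIV: "ssupp UNIV y f \<longleftrightarrow> is_supp y f"
proof
  assume h: "ssupp UNIV y f"
  hence "bounded_linear f" unfolding ssupp_def
    by (intro bounded_linear_intro[where K=1]) auto
  thus "is_supp y f" using h unfolding ssupp_def is_supp_def by auto
next
  assume h: "is_supp y f" thus "ssupp UNIV y f"
    unfolding ssupp_def using is_supp_lin(1,2)[OF h] is_supp_bound[OF h] is_supp_val[OF h] by blast
qed

lemma smooth_UNIV:
  "smooth_point_in UNIV y \<longleftrightarrow> y \<noteq> 0 \<and> (\<forall>f g. is_supp y f \<longrightarrow> is_supp y g \<longrightarrow> f = g)"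
proof (cases "y = 0")
  case True thus ?thesis unfolding smooth_point_in_def by simp
next
  case False
  have e: "support_functional_on UNIV y f \<longleftrightarrow> is_supp y f" for f
    using supp_equiv[of UNIV y f] False ssupp_UNIV by simp
  show ?thesis unfolding smooth_point_in_def e using False hb by (auto simp: fun_eq_iff)
qed




definition clu :: "(nat \<Rightarrow> 'i \<Rightarrow> real) \<Rightarrow> ('i \<Rightarrow> real) \<Rightarrow> bool" where
  "clu h H \<longleftrightarrow> (\<forall>F e N. finite F \<longrightarrow> e > 0 \<longrightarrow> (\<exists>n\<ge>N. \<forall>i\<in>F. \<bar>h n i - H i\<bar> < e))"

lemma clu_ex: "(\<And>n i. \<bar>h n i\<bar> \<le> b i) \<Longrightarrow> \<exists>H. clu h H"
  unfolding clu_def by (rule cluster_exists)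

lemma cluD:
  assumes "clu h H" "finite F" "e > 0"
  shows "\<exists>n\<ge>N. \<forall>i\<in>F. \<bar>h n i - H i\<bar> < e"
  using assms unfolding clu_def by blast

lemma cluD1:
  assumes "clu h H" "e > 0"
  shows "\<exists>n\<ge>N. \<bar>h n i - H i\<bar> < e"
  using cluD[OF assms(1) _ assms(2), of "{i}" N] by simp

lemma clu_eq3:
  assumes c: "clu h H" and e: "\<And>n. h n k = \<alpha> * h n i + \<beta> * h n j"
  shows "H k = \<alpha> * H i + \<beta> * H j"
proof (rule ccontr)
  assume ne: "H k \<noteq> \<alpha> * H i + \<beta> * H j"
  define d where "d = \<bar>H k - (\<alpha> * H i + \<beta> * H j)\<bar>"
  have d: "d > 0" using ne by (simp add: d_def)
  define ep where "ep = d / (2 * (1 + \<bar>\<alpha>\<bar> + \<bar>\<beta>\<bar>))"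
  have ep: "ep > 0" using d by (simp add: ep_def add_pos_nonneg)
  obtain n where n: "\<forall>l\<in>{i,j,k}. \<bar>h n l - H l\<bar> < ep"
    using cluD[OF c _ ep, of "{i,j,k}" 0] by auto
  have "d = \<bar>(H k - h n k) + \<alpha> * (h n i - H i) + \<beta> * (h n j - H j)\<bar>"
    unfolding d_def using e[of n] by (simp add: algebra_simps)
  also have "\<dots> \<le> \<bar>H k - h n k\<bar> + \<bar>\<alpha>\<bar> * \<bar>h n i - H i\<bar> + \<bar>\<beta>\<bar> * \<bar>h n j - H j\<bar>"
  proof -
    have t: "\<bar>x + y + z\<bar> \<le> \<bar>x\<bar> + \<bar>y\<bar> + \<bar>z\<bar>" for x y z :: real
      by (meson abs_triangle_ineq add_right_mono order_trans)
    show ?thesis using t[of "H k - h n k" "\<alpha> * (h n i - H i)" "\<beta> * (h n j - H j)"] unfolding abs_mult .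
  qed
  also have "\<dots> \<le> ep + \<bar>\<alpha>\<bar> * ep + \<bar>\<beta>\<bar> * ep"
    using n by (intro add_mono mult_left_mono) (auto simp: abs_minus_commute)
  also have "\<dots> = ep * (1 + \<bar>\<alpha>\<bar> + \<bar>\<beta>\<bar>)" by (simp add: algebra_simps)
  also have "\<dots> = d / 2"
  proof -
    have "(1 + \<bar>\<alpha>\<bar> + \<bar>\<beta>\<bar>) > 0" by (simp add: add_pos_nonneg)
    thus ?thesis unfolding ep_def by (simp add: field_simps)
  qed
  finally show False using d by simp
qed

lemma clu_lim:
  assumes c: "clu h H" and l: "(\<lambda>n. h n i) \<longlonglongrightarrow> L"
  shows "H i = L"
proof (rule ccontr)
  assume ne: "H i \<noteq> L"
  define e where "e = \<bar>H i - L\<bar> / 2"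
  have e: "e > 0" using ne by (simp add: e_def)
  obtain N where N: "\<forall>n\<ge>N. \<bar>h n i - L\<bar> < e"
    using LIMSEQ_D[OF l e] by (auto simp: dist_real_def)
  obtain n where "n \<ge> N" "\<bar>h n i - H i\<bar> < e"
    using cluD1[OF c e] by blast
  hence "\<bar>H i - L\<bar> < 2 * e" using N[rule_format, OF \<open>n \<ge> N\<close>] by linarith
  thus False unfolding e_def by simp
qed

lemma clu_bound:
  assumes c: "clu h H" and b: "\<And>n. \<bar>h n i\<bar> \<le> B"
  shows "\<bar>H i\<bar> \<le> B"
proof (rule ccontr)
  assume nt: "\<not> \<bar>H i\<bar> \<le> B"
  define e where "e = \<bar>H i\<bar> - B"
  have e: "e > 0" using nt by (simp add: e_def)
  obtain n where "\<bar>h n i - H i\<bar> < e"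
    using cluD1[OF c e] by blast
  thus False using b[of n] unfolding e_def by linarith
qed

lemma in_closure_image:
  fixes T :: "'a::real_normed_vector \<Rightarrow>\<^sub>L 'b::real_normed_vector"
  assumes "norm x \<le> 1"
  shows "T x \<in> closure (blinfun_apply T ` ball 0 1)"
proof -
  define s where "s n = (1 - 1 / (real n + 2)) *\<^sub>R x" for n
  have "s n \<in> ball 0 1" for n
  proof -
    have "norm (s n) = \<bar>1 - 1 / (real n + 2)\<bar> * norm x" by (simp add: s_def)
    also have "\<dots> \<le> \<bar>1 - 1 / (real n + 2)\<bar>" using assms by (simp add: mult_left_le)
    also have "\<dots> < 1"
    proof -
      have "0 < 1 / (real n + 2)" "1 / (real n + 2) \<le> 1" by (auto simp: field_simps)
      thus ?thesis by linarith
    qed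
    finally show ?thesis by simp
  qed
  moreover have "(\<lambda>n. 1 - 1 / (real n + 2)) \<longlonglongrightarrow> 1"
  proof -
    have "(\<lambda>n. 1 / (real n + 2)) \<longlonglongrightarrow> 0"
      using LIMSEQ_ignore_initial_segment[OF lim_const_over_n[of 1], of 2]
      by (simp add: add.commute)
    from tendsto_diff[OF tendsto_const[of 1] this] show ?thesis by simp
  qed
  from tendsto_scaleR[OF this tendsto_const[of "T x"]]
  have "(\<lambda>n. T (s n)) \<longlonglongrightarrow> T x"
    unfolding s_def blinfun.scaleR_right by simp
  ultimately show ?thesis unfolding closure_sequential
    by (intro exI[of _ "\<lambda>n. T (s n)"]) auto
qed

lemma compact_opsD: "T \<in> compact_ops \<Longrightarrow> compact (closure (blinfun_apply T ` ball 0 1))"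
  unfolding compact_ops_def by simp

lemma compact_ops_add:
  assumes "T \<in> compact_ops" "A \<in> compact_ops"
  shows "T + A \<in> compact_ops"
proof -
  let ?C = "{x + y | x y. x \<in> closure (blinfun_apply T ` ball 0 1) \<and> y \<in> closure (blinfun_apply A ` ball 0 1)}"
  have c: "compact ?C" using compact_sums[OF compact_opsD[OF assms(1)] compact_opsD[OF assms(2)]] .
  have "blinfun_apply (T + A) ` ball 0 1 \<subseteq> ?C"
  proof
    fix y assume "y \<in> blinfun_apply (T + A) ` ball 0 1"
    then obtain u where u: "u \<in> ball 0 1" "y = T u + A u" by (auto simp: blinfun.add_left)
    have "T u \<in> closure (blinfun_apply T ` ball 0 1)" "A u \<in> closure (blinfun_apply A ` ball 0 1)"
      using u(1) closure_subset[of "blinfun_apply T ` ball 0 1"] closure_subset[of "blinfun_apply A ` ball 0 1"] by auto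
    thus "y \<in> ?C" unfolding u(2) by blast
  qed
  hence "closure (blinfun_apply (T + A) ` ball 0 1) \<subseteq> ?C"
    by (rule closure_minimal[OF _ compact_imp_closed[OF c]])
  hence "?C \<inter> closure (blinfun_apply (T + A) ` ball 0 1) = closure (blinfun_apply (T + A) ` ball 0 1)"
    by (rule Int_absorb1)
  moreover have "compact (?C \<inter> closure (blinfun_apply (T + A) ` ball 0 1))"
    by (rule compact_Int_closed[OF c closed_closure])
  ultimately have "compact (closure (blinfun_apply (T + A) ` ball 0 1))" by (rule subst)
  thus ?thesis unfolding compact_ops_def by simp
qed

lemma compact_ops_scale:
  assumes "T \<in> compact_ops"
  shows "c *\<^sub>R T \<in> compact_ops"
proof -
  let ?C = "(\<lambda>x. c *\<^sub>R x) ` closure (blinfun_apply T ` ball 0 1)"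
  have cc: "compact ?C" using compact_scaling[OF compact_opsD[OF assms]] .
  have "blinfun_apply (c *\<^sub>R T) ` ball 0 1 \<subseteq> ?C"
  proof
    fix y assume "y \<in> blinfun_apply (c *\<^sub>R T) ` ball 0 1"
    then obtain u where u: "u \<in> ball 0 1" "y = c *\<^sub>R T u" by (auto simp: blinfun.scaleR_left)
    have "T u \<in> closure (blinfun_apply T ` ball 0 1)" using u(1) closure_subset[of "blinfun_apply T ` ball 0 1"] by auto
    thus "y \<in> ?C" using u(2) by (intro image_eqI[of _ _ "T u"]) simp
  qed
  hence "closure (blinfun_apply (c *\<^sub>R T) ` ball 0 1) \<subseteq> ?C"
    by (rule closure_minimal[OF _ compact_imp_closed[OF cc]])
  hence "?C \<inter> closure (blinfun_apply (c *\<^sub>R T) ` ball 0 1) = closure (blinfun_apply (c *\<^sub>R T) ` ball 0 1)"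
    by (rule Int_absorb1)
  moreover have "compact (?C \<inter> closure (blinfun_apply (c *\<^sub>R T) ` ball 0 1))"
    by (rule compact_Int_closed[OF cc closed_closure])
  ultimately have "compact (closure (blinfun_apply (c *\<^sub>R T) ` ball 0 1))" by (rule subst)
  thus ?thesis unfolding compact_ops_def by simp
qed

definition rk1 :: "('a::real_normed_vector \<Rightarrow> real) \<Rightarrow> 'b::real_normed_vector \<Rightarrow> 'a \<Rightarrow>\<^sub>L 'b" where
  "rk1 \<phi> w = Blinfun (\<lambda>u. \<phi> u *\<^sub>R w)"

lemma rk1_apply: "bounded_linear \<phi> \<Longrightarrow> blinfun_apply (rk1 \<phi> w) u = \<phi> u *\<^sub>R w"
proof -
  assume "bounded_linear \<phi>"
  hence "bounded_linear (\<lambda>u. \<phi> u *\<^sub>R w)"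
    using bounded_linear_compose[OF bounded_linear_scaleR_left] by blast
  thus ?thesis unfolding rk1_def by (simp add: bounded_linear_Blinfun_apply)
qed

lemma rk1_compact:
  assumes p: "bounded_linear \<phi>"
  shows "rk1 \<phi> w \<in> compact_ops"
proof -
  obtain K where K: "\<And>x. norm (\<phi> x) \<le> norm x * K" "K > 0"
    using bounded_linear.pos_bounded[OF p] by blast
  let ?C = "(\<lambda>r. r *\<^sub>R w) ` {-K..K}"
  have cc: "compact ?C"
    by (intro compact_continuous_image continuous_intros) auto
  have "blinfun_apply (rk1 \<phi> w) ` ball 0 1 \<subseteq> ?C"
  proof
    fix y assume "y \<in> blinfun_apply (rk1 \<phi> w) ` ball 0 1"
    then obtain u where u0: "norm u < 1" "y = rk1 \<phi> w u" by auto
    hence u: "norm u < 1" "y = \<phi> u *\<^sub>R w" using rk1_apply[OF p] by auto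
    have "norm u * K \<le> 1 * K" using u K by (intro mult_right_mono) auto
    hence "\<bar>\<phi> u\<bar> \<le> K" using K(1)[of u] by simp
    thus "y \<in> ?C" using u by (intro image_eqI[of _ _ "\<phi> u"]) (auto simp: abs_le_iff)
  qed
  hence "closure (blinfun_apply (rk1 \<phi> w) ` ball 0 1) \<subseteq> ?C"
    by (rule closure_minimal[OF _ compact_imp_closed[OF cc]])
  hence "?C \<inter> closure (blinfun_apply (rk1 \<phi> w) ` ball 0 1) = closure (blinfun_apply (rk1 \<phi> w) ` ball 0 1)"
    by (rule Int_absorb1)
  moreover have "compact (?C \<inter> closure (blinfun_apply (rk1 \<phi> w) ` ball 0 1))"
    by (rule compact_Int_closed[OF cc closed_closure])
  ultimately have "compact (closure (blinfun_apply (rk1 \<phi> w) ` ball 0 1))" by (rule subst)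
  thus ?thesis unfolding compact_ops_def by simp
qed

lemma approx_max:
  fixes B :: "'a::real_normed_vector \<Rightarrow>\<^sub>L 'b::real_normed_vector"
  assumes e: "norm (e0::'a) = 1" and ep: "ep > 0"
  shows "\<exists>x. norm x = 1 \<and> norm B - ep < norm (B x)"
proof (rule ccontr)
  assume "\<not> ?thesis"
  hence h: "norm (B x) \<le> norm B - ep" if "norm x = 1" for x using that by force
  have nn: "0 \<le> norm B - ep" using h[OF e] norm_ge_zero order_trans by blast
  have "norm (B x) \<le> (norm B - ep) * norm x" for x
  proof (cases "x = 0")
    case True thus ?thesis by simp
  next
    case False
    have "norm (B ((1 / norm x) *\<^sub>R x)) \<le> norm B - ep" using h False by simp
    thus ?thesis using False by (simp add: blinfun.scaleR_right field_simps)
  qed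
  hence "norm B \<le> norm B - ep" by (rule norm_blinfun_bound[OF nn])
  thus False using ep by simp
qed

lemma unit_of_attain:
  fixes T :: "'a::real_normed_vector \<Rightarrow>\<^sub>L 'b::real_normed_vector"
  assumes "norm z \<le> 1" "norm (T z) = norm T" "T \<noteq> 0"
  shows "norm z = 1"
proof (rule ccontr)
  assume ne: "norm z \<noteq> 1"
  have "norm T > 0" using assms(3) by simp
  hence z0: "z \<noteq> 0" using assms(2) by auto
  have lt: "norm z < 1" using ne assms(1) by simp
  have "norm (T z) \<le> norm T * norm z" by (rule norm_blinfun)
  also have "\<dots> < norm T" using lt \<open>norm T > 0\<close> z0 by simp
  finally show False using assms(2) by simp
qed




lemma separation:
  fixes a :: "'b::real_normed_vector"
  assumes "\<And>\<psi>. bounded_linear \<psi> \<Longrightarrow> \<psi> a = (0::real)"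
  shows "a = 0"
proof -
  obtain f where f: "is_supp a f" using hb by blast
  hence "bounded_linear f" unfolding is_supp_def by blast
  hence "f a = 0" by (rule assms)
  thus ?thesis using is_supp_val[OF f] by simp
qed

lemma separation2:
  fixes a b :: "'b::real_normed_vector"
  assumes "\<And>\<psi>. bounded_linear \<psi> \<Longrightarrow> \<psi> a = (\<psi> b::real)"
  shows "a = b"
proof -
  have "a - b = 0"
  proof (rule separation)
    fix \<psi> :: "'b \<Rightarrow> real" assume p: "bounded_linear \<psi>"
    show "\<psi> (a - b) = 0" using assms[OF p] linear_diff[OF bounded_linear.linear[OF p]] by simp
  qed
  thus ?thesis by simp
qed

lemma weak_limit:
  fixes xs :: "nat \<Rightarrow> 'a::real_normed_vector" and A T :: "'a \<Rightarrow>\<^sub>L 'b::real_normed_vector"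
  assumes refl: "reflexive_space TYPE('a)" and nx: "\<And>n. norm (xs n) \<le> 1"
    and lA: "(\<lambda>n. A (xs n)) \<longlonglongrightarrow> w" and lT: "(\<lambda>n. T (xs n)) \<longlonglongrightarrow> v"
  shows "\<exists>z. norm z \<le> 1 \<and> A z = w \<and> T z = v"
proof -
  define h where "h n \<phi> = blinfun_apply \<phi> (xs n)" for n and \<phi> :: "'a \<Rightarrow>\<^sub>L real"
  have hb1: "\<bar>h n \<phi>\<bar> \<le> norm \<phi>" for n \<phi>
  proof -
    have "norm (blinfun_apply \<phi> (xs n)) \<le> norm \<phi> * norm (xs n)" by (rule norm_blinfun)
    also have "\<dots> \<le> norm \<phi> * 1" using nx[of n] by (intro mult_left_mono) auto
    finally show ?thesis by (simp add: h_def)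
  qed
  obtain H where c: "clu h H" using clu_ex[of h norm, OF hb1] by blast
  have Ha: "H (\<phi> + \<psi>) = H \<phi> + H \<psi>" for \<phi> \<psi>
    using clu_eq3[OF c, of "\<phi> + \<psi>" 1 \<phi> 1 \<psi>] by (simp add: h_def blinfun.add_left)
  have Hs: "H (r *\<^sub>R \<phi>) = r * H \<phi>" for r \<phi>
    using clu_eq3[OF c, of "r *\<^sub>R \<phi>" r \<phi> 0 \<phi>] by (simp add: h_def blinfun.scaleR_left)
  have Hb: "\<bar>H \<phi>\<bar> \<le> norm \<phi>" for \<phi> using clu_bound[OF c hb1] .
  have blH: "bounded_linear H"
    by (rule bounded_linear_intro[where K=1]) (use Ha Hs Hb in auto)
  obtain z where z: "\<And>f. blinfun_apply (Blinfun H) f = blinfun_apply f z"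
    using refl unfolding reflexive_space_def by blast
  have Hz: "H f = f z" for f using z[of f] bounded_linear_Blinfun_apply[OF blH] by simp
  have img: "\<psi> (B z) = \<psi> u" if p: "bounded_linear \<psi>" and l: "(\<lambda>n. B (xs n)) \<longlonglongrightarrow> u"
    for \<psi> :: "'b \<Rightarrow> real" and B :: "'a \<Rightarrow>\<^sub>L 'b" and u
  proof -
    have bl: "bounded_linear (\<lambda>x. \<psi> (B x))"
      by (rule bounded_linear_compose[OF p blinfun.bounded_linear_right])
    define \<phi> where "\<phi> = Blinfun (\<lambda>x. \<psi> (B x))"
    have ap: "blinfun_apply \<phi> = (\<lambda>x. \<psi> (B x))" unfolding \<phi>_def by (rule bounded_linear_Blinfun_apply[OF bl])
    have "(\<lambda>n. h n \<phi>) \<longlonglongrightarrow> \<psi> u"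
      unfolding h_def ap using bounded_linear.tendsto[OF p l] .
    hence "H \<phi> = \<psi> u" by (rule clu_lim[OF c])
    thus ?thesis using Hz[of \<phi>] ap by simp
  qed
  have "A z = w" by (rule separation2) (rule img[OF _ lA])
  moreover have "T z = v" by (rule separation2) (rule img[OF _ lT])
  moreover have "norm z \<le> 1"
  proof -
    obtain f where f: "is_supp z f" using hb by blast
    have bl: "bounded_linear f" using f unfolding is_supp_def by blast
    define \<phi> where "\<phi> = Blinfun f"
    have ap: "blinfun_apply \<phi> = f" unfolding \<phi>_def by (rule bounded_linear_Blinfun_apply[OF bl])
    have "\<bar>h n \<phi>\<bar> \<le> 1" for n
      using is_supp_bound[OF f, of "xs n"] nx[of n] unfolding h_def ap by simp
    hence "\<bar>H \<phi>\<bar> \<le> 1" by (rule clu_bound[OF c])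
    thus ?thesis using Hz[of \<phi>] ap is_supp_val[OF f] by simp
  qed
  ultimately show ?thesis by blast
qed

lemma ycl:
  fixes g :: "nat \<Rightarrow> 'b::real_normed_vector \<Rightarrow> real"
  assumes uniq: "\<And>f g. is_supp y0 f \<Longrightarrow> is_supp y0 g \<Longrightarrow> f = g" and f0: "is_supp y0 f0"
    and ga: "\<And>n u v. g n (u + v) = g n u + g n v" and gs: "\<And>n c u. g n (c *\<^sub>R u) = c * g n u"
    and gb: "\<And>n u. \<bar>g n u\<bar> \<le> norm u" and gy: "\<And>n. g n (ys n) = norm (ys n)"
    and ly: "ys \<longlonglongrightarrow> y0" and lw: "ws \<longlonglongrightarrow> w" and lg: "(\<lambda>n. g n (ws n)) \<longlonglongrightarrow> c"
  shows "c = f0 w"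
proof -
  have gd: "g n (a - b) = g n a - g n b" for n a b
    using ga[of n a "(-1) *\<^sub>R b"] gs[of n "-1" b] by simp
  obtain H where cl: "clu g H" using clu_ex[of g norm, OF gb] by blast
  have Ha: "H (u + v) = H u + H v" for u v
    using clu_eq3[OF cl, of "u + v" 1 u 1 v] ga by simp
  have Hs: "H (r *\<^sub>R u) = r * H u" for r u
    using clu_eq3[OF cl, of "r *\<^sub>R u" r u 0 u] gs by simp
  have Hb: "\<bar>H u\<bar> \<le> norm u" for u using clu_bound[OF cl gb] .
  have blH: "bounded_linear H"
    by (rule bounded_linear_intro[where K=1]) (use Ha Hs Hb in auto)
  have near: "(\<lambda>n. g n p - g n (qs n)) \<longlonglongrightarrow> 0" if "qs \<longlonglongrightarrow> p" for qs p
  proof (rule Lim_null_comparison)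
    show "\<forall>\<^sub>F n in sequentially. norm (g n p - g n (qs n)) \<le> norm (p - qs n)"
      using gb gd by (simp add: gd[symmetric])
    have "(\<lambda>n. p - qs n) \<longlonglongrightarrow> p - p" by (intro tendsto_intros that)
    hence "(\<lambda>n. norm (p - qs n)) \<longlonglongrightarrow> norm (p - p)" by (rule tendsto_norm)
    thus "(\<lambda>n. norm (p - qs n)) \<longlonglongrightarrow> 0" by simp
  qed
  have "(\<lambda>n. (g n y0 - g n (ys n)) + norm (ys n)) \<longlonglongrightarrow> 0 + norm y0"
    by (intro tendsto_add near ly tendsto_norm)
  hence "(\<lambda>n. g n y0) \<longlonglongrightarrow> norm y0" using gy by simp
  hence Hy: "H y0 = norm y0" by (rule clu_lim[OF cl])
  have "(\<lambda>n. (g n w - g n (ws n)) + g n (ws n)) \<longlonglongrightarrow> 0 + c"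
    by (intro tendsto_add near lw lg)
  hence "(\<lambda>n. g n w) \<longlonglongrightarrow> c" by simp
  hence Hw: "H w = c" by (rule clu_lim[OF cl])
  have "is_supp y0 H" unfolding is_supp_def using blH Hb Hy by blast
  hence "H = f0" using uniq f0 by blast
  thus ?thesis using Hw by simp
qed




lemma subseq3:
  fixes T A :: "'a::real_normed_vector \<Rightarrow>\<^sub>L 'b::real_normed_vector"
    and xs :: "nat \<Rightarrow> 'a" and a :: "nat \<Rightarrow> real"
  assumes T: "T \<in> compact_ops" and A: "A \<in> compact_ops" and nx: "\<And>n. norm (xs n) \<le> 1"
    and ab: "\<And>n. \<bar>a n\<bar> \<le> (B::real)"
  shows "\<exists>r v w d. strict_mono r \<and> ((\<lambda>n. T (xs n)) \<circ> r) \<longlonglongrightarrow> v \<and>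
           ((\<lambda>n. A (xs n)) \<circ> r) \<longlonglongrightarrow> w \<and> (a \<circ> r) \<longlonglongrightarrow> d"
proof -
  let ?K = "closure (blinfun_apply T ` ball 0 1) \<times> (closure (blinfun_apply A ` ball 0 1) \<times> {-B..B})"
  have "compact ?K"
    by (intro compact_Times compact_opsD[OF T] compact_opsD[OF A] compact_Icc)
  hence sc: "seq_compact ?K" by (rule compact_imp_seq_compact)
  have "\<forall>n. (T (xs n), A (xs n), a n) \<in> ?K"
  proof
    fix n
    have "-B \<le> a n" "a n \<le> B" using ab[of n] by (simp_all add: abs_le_iff)
    thus "(T (xs n), A (xs n), a n) \<in> ?K" using in_closure_image[OF nx[of n], of T] in_closure_image[OF nx[of n], of A] by simp
  qed
  then obtain l r where r: "strict_mono r"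
    and l: "((\<lambda>n. (T (xs n), A (xs n), a n)) \<circ> r) \<longlonglongrightarrow> l"
    using seq_compactE[OF sc, of "\<lambda>n. (T (xs n), A (xs n), a n)"] by blast
  have 1: "((\<lambda>n. T (xs n)) \<circ> r) \<longlonglongrightarrow> fst l" using tendsto_fst[OF l] by (simp add: o_def)
  have 2: "((\<lambda>n. A (xs n)) \<circ> r) \<longlonglongrightarrow> fst (snd l)" using tendsto_fst[OF tendsto_snd[OF l]] by (simp add: o_def)
  have 3: "(a \<circ> r) \<longlonglongrightarrow> snd (snd l)" using tendsto_snd[OF tendsto_snd[OF l]] by (simp add: o_def)
  show ?thesis using r 1 2 3 by blast
qed

lemma unit_exists:
  fixes T :: "'a::real_normed_vector \<Rightarrow>\<^sub>L 'b::real_normed_vector"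
  assumes "T \<noteq> 0" shows "\<exists>e::'a. norm e = 1"
proof -
  have "\<exists>x. T x \<noteq> 0"
  proof (rule ccontr)
    assume "\<not> (\<exists>x. T x \<noteq> 0)"
    hence "T = 0" by (intro blinfun_eqI) simp
    thus False using assms by simp
  qed
  then obtain x where "T x \<noteq> 0" by blast
  hence "x \<noteq> 0" by auto
  thus ?thesis by (intro exI[of _ "(1 / norm x) *\<^sub>R x"]) simp
qed

lemma approx_seq:
  fixes B :: "'a::real_normed_vector \<Rightarrow>\<^sub>L 'b::real_normed_vector"
  assumes e: "norm (e0::'a) = 1" and ep: "\<And>n. ep n > 0"
  shows "\<exists>xs. \<forall>n. norm (xs n) = 1 \<and> norm B - ep n < norm (B (xs n))"
proof -
  have "\<forall>n. \<exists>x. norm x = 1 \<and> norm B - ep n < norm (B x)" using approx_max[OF e ep] by blast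
  from choice[OF this] show ?thesis .
qed

lemma attain:
  fixes T :: "'a::real_normed_vector \<Rightarrow>\<^sub>L 'b::real_normed_vector"
  assumes refl: "reflexive_space TYPE('a)" and T: "T \<in> compact_ops" and T0: "T \<noteq> 0"
  shows "\<exists>x0. norm x0 = 1 \<and> norm (T x0) = norm T"
proof -
  obtain e0 :: 'a where e0: "norm e0 = 1" using unit_exists[OF T0] by blast
  obtain xs where xs: "\<And>n. norm (xs n) = 1" "\<And>n. norm T - 1 / (real n + 1) < norm (T (xs n))"
    using approx_seq[OF e0, of "\<lambda>n. 1 / (real n + 1)" T] by auto
  obtain r v w d where r: "strict_mono r" and lv: "((\<lambda>n. T (xs n)) \<circ> r) \<longlonglongrightarrow> v"
    using subseq3[OF T T, of xs "\<lambda>n. 0" 0] xs(1) by (metis abs_zero order_refl)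
  obtain z where z: "norm z \<le> 1" "T z = v"
    using weak_limit[OF refl, of "xs \<circ> r" T v T v] lv xs(1) by (auto simp: o_def)
  have up: "norm (T (xs n)) \<le> norm T" for n
    using norm_blinfun[of T "xs n"] xs(1)[of n] by simp
  have "(\<lambda>n. norm (T (xs (r n)))) \<longlonglongrightarrow> norm T"
  proof (rule tendsto_sandwich[of "\<lambda>n. norm T - 1 / (real (r n) + 1)" _ _ "\<lambda>n. norm T"])
    show "\<forall>\<^sub>F n in sequentially. norm T - 1 / (real (r n) + 1) \<le> norm (T (xs (r n)))"
      using xs(2) by (simp add: less_imp_le)
    show "\<forall>\<^sub>F n in sequentially. norm (T (xs (r n))) \<le> norm T" using up by simp
    show "(\<lambda>n. norm T) \<longlonglongrightarrow> norm T" by simp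
    have "(\<lambda>n. 1 / (real n + 1)) \<longlonglongrightarrow> 0"
      using LIMSEQ_ignore_initial_segment[OF lim_const_over_n[of 1], of 1] by (simp add: add.commute)
    hence "((\<lambda>n. 1 / (real n + 1)) \<circ> r) \<longlonglongrightarrow> 0" using LIMSEQ_subseq_LIMSEQ r by blast
    hence "(\<lambda>n. norm T - 1 / (real (r n) + 1)) \<longlonglongrightarrow> norm T - 0"
      by (intro tendsto_diff) (auto simp: o_def)
    thus "(\<lambda>n. norm T - 1 / (real (r n) + 1)) \<longlonglongrightarrow> norm T" by simp
  qed
  moreover have "(\<lambda>n. norm (T (xs (r n)))) \<longlonglongrightarrow> norm v"
    using tendsto_norm[OF lv] by (simp add: o_def)
  ultimately have "norm v = norm T" using LIMSEQ_unique by blast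
  hence "norm (T z) = norm T" using z by simp
  thus ?thesis using unit_of_attain[OF z(1) _ T0] by blast
qed




lemma bl_cmult: "bounded_linear f \<Longrightarrow> bounded_linear (\<lambda>x. c * (f x::real))"
  using bounded_linear_compose[OF bounded_linear_mult_right[of c]] by blast

lemma sep2:
  fixes x1 x2 :: "'a::real_normed_vector"
  assumes n1: "norm x1 = 1" and n2: "norm x2 = 1" and ne1: "x2 \<noteq> x1" and ne2: "x2 \<noteq> - x1"
  shows "\<exists>\<phi>. bounded_linear \<phi> \<and> \<phi> x1 = (0::real) \<and> \<phi> x2 = 1"
proof -
  obtain \<psi>1 where p1: "is_supp x1 \<psi>1" using hb by blast
  have b1: "bounded_linear \<psi>1" using p1 unfolding is_supp_def by blast
  have v1: "\<psi>1 x1 = 1" using is_supp_val[OF p1] n1 by simp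
  have "\<exists>\<psi>. bounded_linear \<psi> \<and> \<psi> x2 \<noteq> \<psi> x1 * \<psi>1 x2"
  proof (rule ccontr)
    assume "\<not> ?thesis"
    hence all: "\<And>\<psi>. bounded_linear \<psi> \<Longrightarrow> \<psi> x2 = \<psi> x1 * \<psi>1 x2" by blast
    have "x2 - \<psi>1 x2 *\<^sub>R x1 = 0"
    proof (rule separation)
      fix \<psi> :: "'a \<Rightarrow> real" assume p: "bounded_linear \<psi>"
      have l: "linear \<psi>" using p bounded_linear.linear by blast
      show "\<psi> (x2 - \<psi>1 x2 *\<^sub>R x1) = 0"
        using all[OF p] linear_diff[OF l] linear_scale[OF l] by simp
    qed
    hence e: "x2 = \<psi>1 x2 *\<^sub>R x1" by simp
    hence "\<bar>\<psi>1 x2\<bar> = 1" using n1 n2 by (metis mult.right_neutral norm_scaleR)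
    hence "\<psi>1 x2 = 1 \<or> \<psi>1 x2 = -1" by linarith
    thus False using e ne1 ne2 by auto
  qed
  then obtain \<psi> where p: "bounded_linear \<psi>" and ne: "\<psi> x2 \<noteq> \<psi> x1 * \<psi>1 x2" by blast
  define k where "k = \<psi> x2 - \<psi> x1 * \<psi>1 x2"
  have k: "k \<noteq> 0" using ne by (simp add: k_def)
  define \<phi> where "\<phi> u = (1 / k) * (\<psi> u - \<psi> x1 * \<psi>1 u)" for u
  have "bounded_linear \<phi>" unfolding \<phi>_def
    by (intro bl_cmult bounded_linear_sub p b1)
  moreover have "\<phi> x1 = 0" unfolding \<phi>_def using v1 by simp
  moreover have "\<phi> x2 = 1" unfolding \<phi>_def using k by (simp add: k_def)
  ultimately show ?thesis by (intro exI[of _ \<phi>]) simp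
qed

lemma is_supp_neg: "is_supp y f \<Longrightarrow> is_supp (- y) (\<lambda>x. - f x)"
  unfolding is_supp_def using is_supp_lin(3)[of y f]
  by (auto intro: bounded_linear_minus simp: is_supp_def)

lemma sip_exists:
  fixes y0 :: "'b::real_normed_vector"
  assumes y0: "y0 \<noteq> 0" and g0: "is_supp y0 g0"
  shows "\<exists>s. compatible_sip s \<and> (\<forall>u. s u y0 = norm y0 * g0 u)"
proof -
  define e0 where "e0 = (1 / norm y0) *\<^sub>R y0"
  have ne0: "norm e0 = 1" using y0 by (simp add: e0_def)
  have ge0: "is_supp e0 g0"
    using g0 y0 unfolding is_supp_def e0_def by (auto simp: is_supp_lin(2)[OF g0])
  define Q where "Q S = (SOME p. fst p \<in> S \<and> is_supp (fst p) (snd p) \<and> (e0 \<in> S \<longrightarrow> p = (e0, g0)))"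
    for S :: "'b set"
  define P where "P u = Q {u, -u}" for u
  have Pspec: "fst (P u) \<in> {u, -u} \<and> is_supp (fst (P u)) (snd (P u)) \<and> (e0 \<in> {u,-u} \<longrightarrow> P u = (e0, g0))"
    if "norm u = 1" for u
  proof -
    have "\<exists>p. fst p \<in> {u,-u} \<and> is_supp (fst p) (snd p) \<and> (e0 \<in> {u,-u} \<longrightarrow> p = (e0, g0))"
    proof (cases "e0 \<in> {u,-u}")
      case True thus ?thesis using ge0 by (intro exI[of _ "(e0, g0)"]) simp
    next
      case False
      obtain f where "is_supp u f" using hb by blast
      thus ?thesis using False by (intro exI[of _ "(u, f)"]) simp
    qed
    thus ?thesis unfolding P_def Q_def by (rule someI_ex)
  qed
  define G where "G u = (if fst (P u) = u then snd (P u) else (\<lambda>x. - snd (P u) x))" for u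
  have Gs: "is_supp u (G u)" if u: "norm u = 1" for u
  proof (cases "fst (P u) = u")
    case True thus ?thesis using Pspec[OF u] by (simp add: G_def)
  next
    case False
    hence "fst (P u) = -u" using Pspec[OF u] by auto
    hence "is_supp (-u) (snd (P u))" using Pspec[OF u] by metis
    hence "is_supp (- (-u)) (\<lambda>x. - snd (P u) x)" by (rule is_supp_neg)
    thus ?thesis using False by (simp add: G_def)
  qed
  have Gn: "G (-u) = (\<lambda>x. - G u x)" if u: "norm u = 1" for u
  proof -
    have uu: "u \<noteq> -u"
    proof
      assume "u = -u"
      hence "(2::real) *\<^sub>R u = 0" by (metis add.right_inverse scaleR_2)
      hence "u = 0" by simp
      thus False using u by simp
    qed
    have "{-u, - (-u)} = {u, -u}" by auto
    hence PP: "P (-u) = P u" unfolding P_def by simp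
    have "fst (P u) \<in> {u, -u}" using Pspec[OF u] by blast
    thus ?thesis unfolding G_def PP using uu by (auto simp: fun_eq_iff)
  qed
  have Ge0: "G e0 = g0" using Pspec[OF ne0] by (simp add: G_def)
  define s where "s x y = (if y = 0 then 0 else norm y * G ((1 / norm y) *\<^sub>R y) x)" for x y
  have nunit: "norm ((1 / norm y) *\<^sub>R y) = 1" if "y \<noteq> 0" for y :: 'b using that by simp
  have sa: "s (x + x') y = s x y + s x' y" for x x' y
    unfolding s_def using is_supp_lin(1)[OF Gs[OF nunit]] by (simp add: algebra_simps)
  have ssc: "s (c *\<^sub>R x) y = c * s x y" for c x y
    unfolding s_def using is_supp_lin(2)[OF Gs[OF nunit]] by (simp add: algebra_simps)
  have sb: "\<bar>s x y\<bar> \<le> norm x * norm y" for x y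
  proof (cases "y = 0")
    case True thus ?thesis by (simp add: s_def)
  next
    case False
    have "\<bar>s x y\<bar> = norm y * \<bar>G ((1 / norm y) *\<^sub>R y) x\<bar>" using False by (simp add: s_def abs_mult)
    also have "\<dots> \<le> norm y * norm x"
      using is_supp_bound[OF Gs[OF nunit[OF False]]] by (intro mult_left_mono) auto
    finally show ?thesis by (simp add: mult.commute)
  qed
  have sxx: "s x x = (norm x)\<^sup>2" for x
  proof (cases "x = 0")
    case True thus ?thesis by (simp add: s_def)
  next
    case False
    let ?e = "(1 / norm x) *\<^sub>R x"
    have xe: "x = norm x *\<^sub>R ?e" using False by simp
    have "G ?e x = norm x * G ?e ?e"
      using is_supp_lin(2)[OF Gs[OF nunit[OF False]], of "norm x" ?e] xe by simp
    also have "G ?e ?e = 1" using is_supp_val[OF Gs[OF nunit[OF False]]] nunit[OF False] by simp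
    finally show ?thesis using False by (simp add: s_def power2_eq_square)
  qed
  have shom: "s x (c *\<^sub>R y) = c * s x y" for c x y
  proof (cases "c = 0 \<or> y = 0")
    case True thus ?thesis by (auto simp: s_def)
  next
    case False
    hence c: "c \<noteq> 0" and y: "y \<noteq> 0" by auto
    let ?e = "(1 / norm y) *\<^sub>R y"
    show ?thesis
    proof (cases "c > 0")
      case True
      have "(1 / norm (c *\<^sub>R y)) *\<^sub>R (c *\<^sub>R y) = ?e" using True y by simp
      thus ?thesis using True c y by (simp add: s_def)
    next
      case False
      hence cn: "c < 0" using c by simp
      have "(1 / norm (c *\<^sub>R y)) *\<^sub>R (c *\<^sub>R y) = - ?e" using cn y by (simp add: field_simps)
      moreover have "G (- ?e) = (\<lambda>x. - G ?e x)" by (rule Gn[OF nunit[OF y]])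
      ultimately show ?thesis using cn c y by (simp add: s_def)
    qed
  qed
  have "compatible_sip s" unfolding compatible_sip_def
  proof (intro conjI allI impI)
    show "s (x + y) z = s x z + s y z" for x y z by (rule sa)
    show "s (c *\<^sub>R x) y = c * s x y" for c x y by (rule ssc)
    show "s x x > 0" if "x \<noteq> 0" for x using sxx[of x] that by simp
    show "(s x y)\<^sup>2 \<le> s x x * s y y" for x y
    proof -
      have "(s x y)\<^sup>2 = \<bar>s x y\<bar>\<^sup>2" by simp
      also have "\<dots> \<le> (norm x * norm y)\<^sup>2" by (rule power_mono[OF sb]) simp
      also have "\<dots> = s x x * s y y" using sxx by (simp add: power_mult_distrib)
      finally show ?thesis .
    qed
    show "s x (c *\<^sub>R y) = c * s x y" for c x y by (rule shom)
    show "s x x = (norm x)\<^sup>2" for x by (rule sxx)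
  qed
  moreover have "s u y0 = norm y0 * g0 u" for u
    using y0 Ge0 by (simp add: s_def e0_def)
  ultimately show ?thesis by blast
qed




lemma inv_lim: "(\<lambda>n. 1 / (real n + 1)) \<longlonglongrightarrow> 0"
  using LIMSEQ_ignore_initial_segment[OF lim_const_over_n[of 1], of 1] by (simp add: add.commute)

lemma in_attain: "x \<in> norm_attain_set T \<longleftrightarrow> norm x = 1 \<and> norm (T x) = norm T"
  unfolding norm_attain_set_def by simp

lemma lemD:
  fixes T A :: "'a::real_normed_vector \<Rightarrow>\<^sub>L 'b::real_normed_vector"
  assumes refl: "reflexive_space TYPE('a)" and T: "T \<in> compact_ops" and A: "A \<in> compact_ops"
    and T0: "T \<noteq> 0" and MT: "norm_attain_set T = {x0, -x0}"
    and uniq: "\<And>f g. is_supp (T x0) f \<Longrightarrow> is_supp (T x0) g \<Longrightarrow> f = g" and f0: "is_supp (T x0) f0"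
    and grow: "\<And>t. t > 0 \<Longrightarrow> norm T + t * c \<le> norm (T + t *\<^sub>R A)"
  shows "c \<le> f0 (A x0)"
proof -
  have x0: "x0 \<in> norm_attain_set T" using MT by simp
  hence nx0: "norm x0 = 1" by (simp add: in_attain)
  define t where "t n = 1 / (real n + 1)" for n
  have tpos: "t n > 0" for n by (simp add: t_def)
  have tle: "t n \<le> 1" for n by (simp add: t_def)
  have "\<forall>n. \<exists>x. norm x = 1 \<and> norm (T + t n *\<^sub>R A) - (t n)\<^sup>2 < norm ((T + t n *\<^sub>R A) x)"
  proof
    fix n
    have "(t n)\<^sup>2 > 0" using tpos[of n] by simp
    thus "\<exists>x. norm x = 1 \<and> norm (T + t n *\<^sub>R A) - (t n)\<^sup>2 < norm ((T + t n *\<^sub>R A) x)"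
      by (rule approx_max[OF nx0])
  qed
  from choice[OF this] obtain xs where xs: "\<And>n. norm (xs n) = 1"
    "\<And>n. norm (T + t n *\<^sub>R A) - (t n)\<^sup>2 < norm ((T + t n *\<^sub>R A) (xs n))" by blast
  define Y where "Y n = T (xs n) + t n *\<^sub>R A (xs n)" for n
  have Yeq: "(T + t n *\<^sub>R A) (xs n) = Y n" for n by (simp add: Y_def blinfun.add_left blinfun.scaleR_left)
  have "\<forall>n. \<exists>f. is_supp (Y n) f" using hb by blast
  from choice[OF this] obtain g where g: "\<And>n. is_supp (Y n) (g n)" by blast
  define a where "a n = g n (A (xs n))" for n
  have nTx: "norm (T (xs n)) \<le> norm T" for n using norm_blinfun[of T "xs n"] xs(1) by simp
  have nAx: "norm (A (xs n)) \<le> norm A" for n using norm_blinfun[of A "xs n"] xs(1) by simp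
  have ab: "\<bar>a n\<bar> \<le> norm A" for n using is_supp_bound[OF g[of n], of "A (xs n)"] nAx[of n] by (simp add: a_def)
  have key: "c - t n < a n" for n
  proof -
    have "norm (Y n) = g n (Y n)" using is_supp_val[OF g[of n]] by simp
    also have "\<dots> = g n (T (xs n)) + t n * a n"
      unfolding Y_def a_def using is_supp_lin(1,2)[OF g[of n]] by simp
    also have "g n (T (xs n)) \<le> norm T"
      using is_supp_bound[OF g[of n], of "T (xs n)"] nTx[of n] by simp
    finally have "norm (Y n) \<le> norm T + t n * a n" by simp
    moreover have "norm T + t n * c \<le> norm (T + t n *\<^sub>R A)" using grow[OF tpos] .
    ultimately have "norm T + t n * c < norm T + t n * a n + (t n)\<^sup>2" using xs(2)[of n] Yeq[of n] by simp
    hence "t n * c < t n * (a n + t n)" by (simp add: algebra_simps power2_eq_square)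
    thus ?thesis using tpos[of n] by (simp add: mult_less_cancel_left_pos)
  qed
  have lowT: "norm T - t n * (\<bar>c\<bar> + 1 + norm A) \<le> norm (T (xs n))" for n
  proof -
    have "norm (T (xs n)) \<ge> norm (Y n) - t n * norm (A (xs n))"
      using norm_triangle_ineq[of "T (xs n)" "t n *\<^sub>R A (xs n)"] tpos[of n] by (simp add: Y_def)
    moreover have "t n * norm (A (xs n)) \<le> t n * norm A" using nAx tpos by (simp add: less_imp_le)
    moreover have "norm T + t n * c - (t n)\<^sup>2 < norm (Y n)"
      using xs(2)[of n] Yeq[of n] grow[OF tpos[of n]] by simp
    moreover have "(t n)\<^sup>2 \<le> t n" using tle[of n] tpos[of n] by (simp add: power2_eq_square mult_left_le_one_le)
    moreover have "- (t n * \<bar>c\<bar>) \<le> t n * c" using tpos[of n] by (simp add: abs_if)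
    ultimately show ?thesis by (simp add: algebra_simps)
  qed
  obtain r v w d where r: "strict_mono r" and lv: "((\<lambda>n. T (xs n)) \<circ> r) \<longlonglongrightarrow> v"
    and lw: "((\<lambda>n. A (xs n)) \<circ> r) \<longlonglongrightarrow> w" and ld: "(a \<circ> r) \<longlonglongrightarrow> d"
  proof -
    have nx1: "\<And>n. norm (xs n) \<le> 1" using xs(1) by simp
    show ?thesis using subseq3[OF T A, of xs a "norm A", OF nx1 ab] that by blast
  qed
  obtain z where z: "norm z \<le> 1" "A z = w" "T z = v"
  proof -
    have nx1: "\<And>n. norm ((xs \<circ> r) n) \<le> 1" using xs(1) by simp
    have a1: "(\<lambda>n. A ((xs \<circ> r) n)) \<longlonglongrightarrow> w" using lw by (simp add: comp_def)
    have a2: "(\<lambda>n. T ((xs \<circ> r) n)) \<longlonglongrightarrow> v" using lv by (simp add: comp_def)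
    show ?thesis using weak_limit[OF refl nx1 a1 a2] that by blast
  qed
  have tr: "(t \<circ> r) \<longlonglongrightarrow> 0" using LIMSEQ_subseq_LIMSEQ[OF inv_lim r] by (simp add: t_def[abs_def])
  have "(\<lambda>n. norm (T (xs (r n)))) \<longlonglongrightarrow> norm T"
  proof (rule tendsto_sandwich[of "\<lambda>n. norm T - t (r n) * (\<bar>c\<bar> + 1 + norm A)" _ _ "\<lambda>n. norm T"])
    show "\<forall>\<^sub>F n in sequentially. norm T - t (r n) * (\<bar>c\<bar> + 1 + norm A) \<le> norm (T (xs (r n)))"
      using lowT by simp
    show "\<forall>\<^sub>F n in sequentially. norm (T (xs (r n))) \<le> norm T" using nTx by simp
    show "(\<lambda>n. norm T) \<longlonglongrightarrow> norm T" by simp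
    have "(\<lambda>n. norm T - t (r n) * (\<bar>c\<bar> + 1 + norm A)) \<longlonglongrightarrow> norm T - 0 * (\<bar>c\<bar> + 1 + norm A)"
      using tr by (intro tendsto_intros) (simp add: o_def)
    thus "(\<lambda>n. norm T - t (r n) * (\<bar>c\<bar> + 1 + norm A)) \<longlonglongrightarrow> norm T" by simp
  qed
  moreover have "(\<lambda>n. norm (T (xs (r n)))) \<longlonglongrightarrow> norm v" using tendsto_norm[OF lv] by (simp add: o_def)
  ultimately have nv: "norm v = norm T" using LIMSEQ_unique by blast
  hence "norm z = 1" using unit_of_attain[OF z(1) _ T0] z(3) by simp
  hence "z \<in> norm_attain_set T" using nv z(3) by (simp add: in_attain)
  hence zz: "z = x0 \<or> z = -x0" using MT by simp
  have dc: "c \<le> d"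
  proof -
    have "((\<lambda>n. a (r n) + t (r n))) \<longlonglongrightarrow> d + 0" using ld tr by (intro tendsto_add) (simp_all add: o_def)
    moreover have "\<forall>n. c \<le> a (r n) + t (r n)" using key by (simp add: less_imp_le algebra_simps)
    ultimately show ?thesis using LIMSEQ_le_const[of "\<lambda>n. a (r n) + t (r n)" "d + 0" c] by simp
  qed
  have lY: "(\<lambda>n. Y (r n)) \<longlonglongrightarrow> v"
  proof -
    have "(\<lambda>n. T (xs (r n)) + t (r n) *\<^sub>R A (xs (r n))) \<longlonglongrightarrow> v + 0 *\<^sub>R w"
      using lv lw tr by (intro tendsto_intros) (simp_all add: o_def)
    thus ?thesis by (simp add: Y_def)
  qed
  have lw': "(\<lambda>n. A (xs (r n))) \<longlonglongrightarrow> w" using lw by (simp add: o_def)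
  have ld': "(\<lambda>n. g (r n) (A (xs (r n)))) \<longlonglongrightarrow> d" using ld by (simp add: o_def a_def)
  have "d = f0 (A x0)"
  proof (cases "z = x0")
    case True
    have "d = f0 w"
    proof (rule ycl[OF uniq f0, of "\<lambda>n. g (r n)" "\<lambda>n. Y (r n)"])
      show "\<And>n u v. g (r n) (u + v) = g (r n) u + g (r n) v" using is_supp_lin(1)[OF g] by simp
      show "\<And>n c u. g (r n) (c *\<^sub>R u) = c * g (r n) u" using is_supp_lin(2)[OF g] by simp
      show "\<And>n u. \<bar>g (r n) u\<bar> \<le> norm u" using is_supp_bound[OF g] by simp
      show "\<And>n. g (r n) (Y (r n)) = norm (Y (r n))" using is_supp_val[OF g] by simp
      show "(\<lambda>n. Y (r n)) \<longlonglongrightarrow> T x0" using lY True z(3) by simp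
      show "(\<lambda>n. A (xs (r n))) \<longlonglongrightarrow> w" by (rule lw')
      show "(\<lambda>n. g (r n) (A (xs (r n)))) \<longlonglongrightarrow> d" by (rule ld')
    qed
    thus ?thesis using True z(2) by simp
  next
    case False
    hence zx: "z = -x0" using zz by simp
    have "- d = f0 w"
    proof (rule ycl[OF uniq f0, of "\<lambda>n u. - g (r n) u" "\<lambda>n. - Y (r n)"])
      show "\<And>n u v. - g (r n) (u + v) = - g (r n) u + - g (r n) v" using is_supp_lin(1)[OF g] by simp
      show "\<And>n c u. - g (r n) (c *\<^sub>R u) = c * - g (r n) u" using is_supp_lin(2)[OF g] by simp
      show "\<And>n u. \<bar>- g (r n) u\<bar> \<le> norm u" using is_supp_bound[OF g] by simp
      show "\<And>n. - g (r n) (- Y (r n)) = norm (- Y (r n))" using is_supp_val[OF g] is_supp_lin(3)[OF g] by simp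
      have "(\<lambda>n. - Y (r n)) \<longlonglongrightarrow> - v" by (intro tendsto_intros lY)
      moreover have mv: "- v = T x0" using zx z(3) by (auto simp: blinfun.minus_right)
      ultimately show "(\<lambda>n. - Y (r n)) \<longlonglongrightarrow> T x0" by (simp only: mv)
      show "(\<lambda>n. A (xs (r n))) \<longlonglongrightarrow> w" by (rule lw')
      show "(\<lambda>n. - g (r n) (A (xs (r n)))) \<longlonglongrightarrow> - d" by (intro tendsto_intros ld')
    qed
    moreover have "w = - A x0" using zx z(2) by (simp add: blinfun.minus_right)
    ultimately show ?thesis using is_supp_lin(3)[OF f0] by simp
  qed
  thus ?thesis using dc by simp
qed




lemma smooth_K:
  fixes T :: "'a::real_normed_vector \<Rightarrow>\<^sub>L 'b::real_normed_vector"
  assumes T: "T \<in> compact_ops" and T0: "T \<noteq> 0"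
  shows "smooth_point_in compact_ops T \<longleftrightarrow> (\<exists>F. ssupp compact_ops T F) \<and>
    (\<forall>F G. ssupp compact_ops T F \<longrightarrow> ssupp compact_ops T G \<longrightarrow> (\<forall>u\<in>compact_ops. F u = G u))"
proof -
  have e: "support_functional_on compact_ops T F \<longleftrightarrow> ssupp compact_ops T F" for F
    by (rule supp_equiv[OF compact_ops_scale T T0])
  show ?thesis unfolding smooth_point_in_def e using T T0 by blast
qed

lemma Fx_ssupp:
  fixes T :: "'a::real_normed_vector \<Rightarrow>\<^sub>L 'b::real_normed_vector"
  assumes x: "x \<in> norm_attain_set T" and f: "is_supp (T x) f"
  shows "ssupp S T (\<lambda>A. f (A x))"
proof -
  have nx: "norm x = 1" "norm (T x) = norm T" using x by (simp_all add: in_attain)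
  show ?thesis unfolding ssupp_def
  proof (intro conjI ballI allI)
    show "f ((u + v) x) = f (u x) + f (v x)" for u v :: "'a \<Rightarrow>\<^sub>L 'b"
      using is_supp_lin(1)[OF f] by (simp add: blinfun.add_left)
    show "f ((c *\<^sub>R u) x) = c * f (u x)" for c and u :: "'a \<Rightarrow>\<^sub>L 'b"
      using is_supp_lin(2)[OF f] by (simp add: blinfun.scaleR_left)
    show "\<bar>f (u x)\<bar> \<le> norm u" for u :: "'a \<Rightarrow>\<^sub>L 'b"
      using is_supp_bound[OF f, of "u x"] norm_blinfun[of u x] nx(1) by simp
    show "f (T x) = norm T" using is_supp_val[OF f] nx(2) by simp
  qed
qed

lemma orth_of_point:
  fixes T A :: "'a::real_normed_vector \<Rightarrow>\<^sub>L 'b::real_normed_vector"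
  assumes nx: "norm x = 1" and f: "is_supp y f" and fT: "f (T x) = norm T" and fA: "f (A x) = 0"
  shows "birkhoff_orth T A"
  unfolding birkhoff_orth_def
proof
  fix t :: real
  have "norm T = f ((T + t *\<^sub>R A) x)"
    using fT fA is_supp_lin(1,2)[OF f] by (simp add: blinfun.add_left blinfun.scaleR_left)
  also have "\<dots> \<le> norm ((T + t *\<^sub>R A) x)" using is_supp_bound[OF f] abs_le_D1 by blast
  also have "\<dots> \<le> norm (T + t *\<^sub>R A)" using norm_blinfun[of "T + t *\<^sub>R A" x] nx by simp
  finally show "norm T \<le> norm (T + t *\<^sub>R A)" .
qed

lemma ii_to_i:
  fixes T :: "'a::real_normed_vector \<Rightarrow>\<^sub>L 'b::real_normed_vector"
  assumes refl: "reflexive_space TYPE('a)" and T: "T \<in> compact_ops" and T0: "T \<noteq> 0"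
    and MT: "norm_attain_set T = {x0, -x0}" and sm: "smooth_point_in UNIV (T x0)"
  shows "smooth_point_in compact_ops T"
proof -
  have uniq: "\<And>f g. is_supp (T x0) f \<Longrightarrow> is_supp (T x0) g \<Longrightarrow> f = g" using sm by (simp add: smooth_UNIV)
  obtain f0 where f0: "is_supp (T x0) f0" using hb by blast
  have x0: "x0 \<in> norm_attain_set T" using MT by simp
  have F0: "ssupp compact_ops T (\<lambda>A. f0 (A x0))" by (rule Fx_ssupp[OF x0 f0])
  have all: "F A = f0 (A x0)" if F: "ssupp compact_ops T F" and A: "A \<in> compact_ops" for F A
  proof -
    have Fa: "\<And>u v. u \<in> compact_ops \<Longrightarrow> v \<in> compact_ops \<Longrightarrow> F (u + v) = F u + F v"
      and Fs: "\<And>u c. u \<in> compact_ops \<Longrightarrow> F (c *\<^sub>R u) = c * F u"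
      and Fb: "\<And>u. u \<in> compact_ops \<Longrightarrow> \<bar>F u\<bar> \<le> norm u" and FT: "F T = norm T"
      using F unfolding ssupp_def by blast+
    have gen: "F B \<le> f0 (B x0)" if B: "B \<in> compact_ops" for B
    proof (rule lemD[OF refl T B T0 MT uniq f0])
      fix t :: real assume "t > 0"
      have tB: "t *\<^sub>R B \<in> compact_ops" by (rule compact_ops_scale[OF B])
      have "norm T + t * F B = F (T + t *\<^sub>R B)" using Fa[OF T tB] Fs[OF B] FT by simp
      also have "\<dots> \<le> norm (T + t *\<^sub>R B)" using Fb[OF compact_ops_add[OF T tB]] by simp
      finally show "norm T + t * F B \<le> norm (T + t *\<^sub>R B)" .
    qed
    have mA: "(-1) *\<^sub>R A \<in> compact_ops" by (rule compact_ops_scale[OF A])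
    have "F ((-1) *\<^sub>R A) \<le> f0 (((-1) *\<^sub>R A) x0)" by (rule gen[OF mA])
    hence "- F A \<le> - f0 (A x0)" using Fs[OF A, of "-1"] is_supp_lin(2)[OF f0, of "-1" "A x0"]
      by (simp add: blinfun.scaleR_left blinfun.minus_left)
    thus ?thesis using gen[OF A] by simp
  qed
  show ?thesis unfolding smooth_K[OF T T0]
  proof (intro conjI allI impI ballI)
    show "\<exists>F. ssupp compact_ops T F" using F0 by blast
    fix F G and u :: "'a \<Rightarrow>\<^sub>L 'b" assume a: "ssupp compact_ops T F" "ssupp compact_ops T G" "u \<in> compact_ops"
    show "F u = G u" using all[OF a(1) a(3)] all[OF a(2) a(3)] by simp
  qed
qed

lemma i_to_ii:
  fixes T :: "'a::real_normed_vector \<Rightarrow>\<^sub>L 'b::real_normed_vector"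
  assumes refl: "reflexive_space TYPE('a)" and T: "T \<in> compact_ops" and T0: "T \<noteq> 0"
    and sm: "smooth_point_in compact_ops T"
  shows "\<exists>x0. norm x0 = 1 \<and> norm_attain_set T = {x0, -x0} \<and> smooth_point_in UNIV (T x0)"
proof -
  have uq: "\<And>F G u. ssupp compact_ops T F \<Longrightarrow> ssupp compact_ops T G \<Longrightarrow> u \<in> compact_ops \<Longrightarrow> F u = G u"
    using sm unfolding smooth_K[OF T T0] by blast
  obtain x1 where x1n: "norm x1 = 1" "norm (T x1) = norm T" using attain[OF refl T T0] by blast
  have x1: "x1 \<in> norm_attain_set T" using x1n by (simp add: in_attain)
  have nT: "norm T > 0" using T0 by simp
  have sub: "norm_attain_set T \<subseteq> {x1, -x1}"
  proof
    fix x2 assume x2: "x2 \<in> norm_attain_set T"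
    show "x2 \<in> {x1, -x1}"
    proof (rule ccontr)
      assume "x2 \<notin> {x1, -x1}"
      hence ne: "x2 \<noteq> x1" "x2 \<noteq> -x1" by auto
      have n2: "norm x2 = 1" "norm (T x2) = norm T" using x2 by (simp_all add: in_attain)
      obtain \<phi> :: "'a \<Rightarrow> real" where \<phi>: "bounded_linear \<phi>" "\<phi> x1 = 0" "\<phi> x2 = 1" using sep2[OF x1n(1) n2(1) ne] by blast
      obtain f1 where f1: "is_supp (T x1) f1" using hb by blast
      obtain f2 where f2: "is_supp (T x2) f2" using hb by blast
      define A :: "'a \<Rightarrow>\<^sub>L 'b" where "A = rk1 \<phi> (T x2)"
      have A: "A \<in> compact_ops" unfolding A_def by (rule rk1_compact[OF \<phi>(1)])
      have "f1 (A x1) = f2 (A x2)"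
        by (rule uq[OF Fx_ssupp[OF x1 f1] Fx_ssupp[OF x2 f2] A])
      moreover have "f1 (A x1) = 0" unfolding A_def rk1_apply[OF \<phi>(1)] using \<phi>(2) is_supp_lin(5)[OF f1] by simp
      moreover have "f2 (A x2) = norm T" unfolding A_def rk1_apply[OF \<phi>(1)] using \<phi>(3) is_supp_val[OF f2] n2 by simp
      ultimately show False using nT by simp
    qed
  qed
  have "-x1 \<in> norm_attain_set T" using x1n by (simp add: in_attain blinfun.minus_right)
  hence MT: "norm_attain_set T = {x1, -x1}" using sub x1 by blast
  have "T x1 \<noteq> 0" using x1n nT by auto
  moreover have "f = g" if f: "is_supp (T x1) f" and g: "is_supp (T x1) g" for f g
  proof
    fix u
    obtain \<phi> where p: "is_supp x1 \<phi>" using hb by blast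
    have bl: "bounded_linear \<phi>" using p unfolding is_supp_def by blast
    have p1: "\<phi> x1 = 1" using is_supp_val[OF p] x1n by simp
    define A :: "'a \<Rightarrow>\<^sub>L 'b" where "A = rk1 \<phi> u"
    have A: "A \<in> compact_ops" unfolding A_def by (rule rk1_compact[OF bl])
    have "f (A x1) = g (A x1)" by (rule uq[OF Fx_ssupp[OF x1 f] Fx_ssupp[OF x1 g] A])
    thus "f u = g u" unfolding A_def rk1_apply[OF bl] p1 by simp
  qed
  ultimately have "smooth_point_in UNIV (T x1)" by (simp add: smooth_UNIV)
  thus ?thesis using MT x1n by blast
qed




lemma sip_cs:
  assumes s: "compatible_sip s"
  shows "\<bar>s u y\<bar> \<le> norm u * norm y"
proof -
  have "(s u y)\<^sup>2 \<le> s u u * s y y" using s unfolding compatible_sip_def by blast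
  also have "\<dots> = (norm u * norm y)\<^sup>2" using s unfolding compatible_sip_def by (simp add: power_mult_distrib)
  finally have "(s u y)\<^sup>2 \<le> (norm u * norm y)\<^sup>2" .
  hence "\<bar>s u y\<bar> \<le> \<bar>norm u * norm y\<bar>" by (simp only: abs_le_square_iff)
  thus ?thesis by simp
qed

lemma sip_props:
  assumes s: "compatible_sip s"
  shows "s (u + v) y = s u y + s v y" "s (c *\<^sub>R u) y = c * s u y" "s u (c *\<^sub>R y) = c * s u y"
    "s y y = (norm y)\<^sup>2"
  using s unfolding compatible_sip_def by blast+

lemma const_norming:
  assumes "x \<in> norm_attain_set T"
  shows "norming_seq T (\<lambda>n. x)"
  using assms unfolding norming_seq_def by (simp add: in_attain)

lemma const_subseq_limit: "subseq_limit (\<lambda>n. c) c"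
  unfolding subseq_limit_def by (intro exI[of _ id]) (simp add: strict_mono_def o_def)

lemma const_cond:
  assumes C: "\<forall>s xs l. compatible_sip s \<longrightarrow> norming_seq T xs \<longrightarrow>
                 subseq_limit (\<lambda>n. s (A (xs n)) (T (xs n))) l \<longrightarrow> l = 0"
    and x: "x \<in> norm_attain_set T" and s: "compatible_sip s"
  shows "s (A x) (T x) = 0"
  using C const_norming[OF x] s const_subseq_limit[of "s (A x) (T x)"] by blast

lemma iii_to_ii:
  fixes T :: "'a::real_normed_vector \<Rightarrow>\<^sub>L 'b::real_normed_vector"
  assumes refl: "reflexive_space TYPE('a)" and T: "T \<in> compact_ops" and T0: "T \<noteq> 0"
    and H3: "\<forall>A\<in>compact_ops. birkhoff_orth T A \<longleftrightarrow>
              (\<forall>s xs l. compatible_sip s \<longrightarrow> norming_seq T xs \<longrightarrow>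
                 subseq_limit (\<lambda>n. s (A (xs n)) (T (xs n))) l \<longrightarrow> l = 0)"
  shows "\<exists>x0. norm x0 = 1 \<and> norm_attain_set T = {x0, -x0} \<and> smooth_point_in UNIV (T x0)"
proof -
  have H: "s (A x) (T x) = 0" if "A \<in> compact_ops" "birkhoff_orth T A" "compatible_sip s"
    "x \<in> norm_attain_set T" for A s x
    using const_cond[of T A x s] H3 that by blast
  obtain x1 where x1n: "norm x1 = 1" "norm (T x1) = norm T" using attain[OF refl T T0] by blast
  have x1: "x1 \<in> norm_attain_set T" using x1n by (simp add: in_attain)
  have nT: "norm T > 0" using T0 by simp
  have sub: "norm_attain_set T \<subseteq> {x1, -x1}"
  proof
    fix x2 assume x2: "x2 \<in> norm_attain_set T"
    show "x2 \<in> {x1, -x1}"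
    proof (rule ccontr)
      assume "x2 \<notin> {x1, -x1}"
      hence ne: "x2 \<noteq> x1" "x2 \<noteq> -x1" by auto
      have n2: "norm x2 = 1" "norm (T x2) = norm T" using x2 by (simp_all add: in_attain)
      obtain \<phi> :: "'a \<Rightarrow> real" where \<phi>: "bounded_linear \<phi>" "\<phi> x1 = 0" "\<phi> x2 = 1"
        using sep2[OF x1n(1) n2(1) ne] by blast
      define A :: "'a \<Rightarrow>\<^sub>L 'b" where "A = rk1 \<phi> (T x2)"
      have A: "A \<in> compact_ops" unfolding A_def by (rule rk1_compact[OF \<phi>(1)])
      have Ax: "A u = \<phi> u *\<^sub>R T x2" for u unfolding A_def by (rule rk1_apply[OF \<phi>(1)])
      obtain f1 where f1: "is_supp (T x1) f1" using hb by blast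
      have orth: "birkhoff_orth T A"
        by (rule orth_of_point[OF x1n(1) f1]) (use is_supp_val[OF f1] x1n is_supp_lin(5)[OF f1] Ax \<phi>(2) in simp_all)
      have T2: "T x2 \<noteq> 0" using n2 nT by auto
      obtain f2 where f2: "is_supp (T x2) f2" using hb by blast
      obtain s :: "'b \<Rightarrow> 'b \<Rightarrow> real" where s: "compatible_sip s" using sip_exists[OF T2 f2] by blast
      have "s (A x2) (T x2) = 0" by (rule H[OF A orth s x2])
      moreover have "s (A x2) (T x2) = (norm (T x2))\<^sup>2" using Ax \<phi>(3) sip_props(4)[OF s] by simp
      ultimately show False using T2 by simp
    qed
  qed
  have "-x1 \<in> norm_attain_set T" using x1n by (simp add: in_attain blinfun.minus_right)
  hence MT: "norm_attain_set T = {x1, -x1}" using sub x1 by blast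
  have y0: "T x1 \<noteq> 0" using x1n nT by auto
  moreover have "f = g" if f: "is_supp (T x1) f" and g: "is_supp (T x1) g" for f g
  proof (rule ccontr)
    assume "f \<noteq> g"
    then obtain w where fw: "f w \<noteq> g w" by auto
    define y where "y = T x1"
    have ny: "norm y = norm T" "norm y > 0" using x1n nT by (simp_all add: y_def)
    define w' where "w' = w - (f w / norm y) *\<^sub>R y"
    have fw': "f w' = 0" unfolding w'_def using is_supp_lin(2,4)[OF f] is_supp_val[OF f] ny
      by (simp add: y_def)
    have gw': "g w' \<noteq> 0" unfolding w'_def using is_supp_lin(2,4)[OF g] is_supp_val[OF g] ny fw
      by (simp add: y_def)
    obtain \<phi> where p: "is_supp x1 \<phi>" using hb by blast
    have bl: "bounded_linear \<phi>" using p unfolding is_supp_def by blast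
    have p1: "\<phi> x1 = 1" using is_supp_val[OF p] x1n by simp
    define A :: "'a \<Rightarrow>\<^sub>L 'b" where "A = rk1 \<phi> w'"
    have A: "A \<in> compact_ops" unfolding A_def by (rule rk1_compact[OF bl])
    have Ax: "A x1 = w'" unfolding A_def rk1_apply[OF bl] p1 by simp
    have orth: "birkhoff_orth T A"
      by (rule orth_of_point[OF x1n(1) f]) (use is_supp_val[OF f] x1n Ax fw' in simp_all)
    obtain s :: "'b \<Rightarrow> 'b \<Rightarrow> real" where s: "compatible_sip s" "\<And>u. s u (T x1) = norm (T x1) * g u"
      using sip_exists[OF y0 g] by blast
    have "s (A x1) (T x1) = 0" by (rule H[OF A orth s(1) x1])
    moreover have "s (A x1) (T x1) = norm (T x1) * g w'" using s(2) Ax by simp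
    ultimately show False using gw' y0 by simp
  qed
  ultimately have "smooth_point_in UNIV (T x1)" by (simp add: smooth_UNIV)
  thus ?thesis using MT x1n by blast
qed




lemma ii_to_iii:
  fixes T :: "'a::real_normed_vector \<Rightarrow>\<^sub>L 'b::real_normed_vector"
  assumes refl: "reflexive_space TYPE('a)" and T: "T \<in> compact_ops" and T0: "T \<noteq> 0"
    and MT: "norm_attain_set T = {x0, -x0}" and sm: "smooth_point_in UNIV (T x0)"
  shows "\<forall>A\<in>compact_ops. birkhoff_orth T A \<longleftrightarrow>
              (\<forall>s xs l. compatible_sip s \<longrightarrow> norming_seq T xs \<longrightarrow>
                 subseq_limit (\<lambda>n. s (A (xs n)) (T (xs n))) l \<longrightarrow> l = 0)"
proof
  fix A :: "'a \<Rightarrow>\<^sub>L 'b" assume A: "A \<in> compact_ops"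
  have uniq: "\<And>f g. is_supp (T x0) f \<Longrightarrow> is_supp (T x0) g \<Longrightarrow> f = g" using sm by (simp add: smooth_UNIV)
  have y0: "T x0 \<noteq> 0" using sm by (simp add: smooth_UNIV)
  obtain f0 where f0: "is_supp (T x0) f0" using hb by blast
  have x0: "x0 \<in> norm_attain_set T" using MT by simp
  hence nx0: "norm x0 = 1" "norm (T x0) = norm T" by (simp_all add: in_attain)
  have nT: "norm T > 0" using T0 by simp
  show "birkhoff_orth T A \<longleftrightarrow>
              (\<forall>s xs l. compatible_sip s \<longrightarrow> norming_seq T xs \<longrightarrow>
                 subseq_limit (\<lambda>n. s (A (xs n)) (T (xs n))) l \<longrightarrow> l = 0)"
  proof
    assume orth: "birkhoff_orth T A"
    have le1: "0 \<le> f0 (A x0)"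
    proof (rule lemD[OF refl T A T0 MT uniq f0])
      fix t :: real assume "t > 0"
      show "norm T + t * 0 \<le> norm (T + t *\<^sub>R A)" using orth unfolding birkhoff_orth_def by simp
    qed
    have mA: "(-1) *\<^sub>R A \<in> compact_ops" by (rule compact_ops_scale[OF A])
    have "0 \<le> f0 (((-1) *\<^sub>R A) x0)"
    proof (rule lemD[OF refl T mA T0 MT uniq f0])
      fix t :: real assume "t > 0"
      have "norm T \<le> norm (T + (- t) *\<^sub>R A)" using orth unfolding birkhoff_orth_def by blast
      thus "norm T + t * 0 \<le> norm (T + t *\<^sub>R ((-1) *\<^sub>R A))" by simp
    qed
    hence "f0 (A x0) \<le> 0" using is_supp_lin(2)[OF f0, of "-1" "A x0"] by (simp add: blinfun.scaleR_left blinfun.minus_left)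
    hence fA: "f0 (A x0) = 0" using le1 by simp
    show "\<forall>s xs l. compatible_sip s \<longrightarrow> norming_seq T xs \<longrightarrow>
                 subseq_limit (\<lambda>n. s (A (xs n)) (T (xs n))) l \<longrightarrow> l = 0"
    proof (intro allI impI)
      fix s :: "'b \<Rightarrow> 'b \<Rightarrow> real" and xs l
      assume s: "compatible_sip s" and ns: "norming_seq T xs"
        and sl: "subseq_limit (\<lambda>n. s (A (xs n)) (T (xs n))) l"
      obtain r1 where r1: "strict_mono r1" and l1: "((\<lambda>n. s (A (xs n)) (T (xs n))) \<circ> r1) \<longlonglongrightarrow> l"
        using sl unfolding subseq_limit_def by blast
      have nxs: "\<And>n. norm (xs n) = 1" and lnT: "(\<lambda>n. norm (T (xs n))) \<longlonglongrightarrow> norm T"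
        using ns unfolding norming_seq_def by blast+
      define ys where "ys = xs \<circ> r1"
      have nys: "\<And>n. norm (ys n) \<le> 1" using nxs by (simp add: ys_def)
      have z0: "\<And>n. \<bar>(\<lambda>n. 0::real) n\<bar> \<le> 0" by simp
      obtain r2 v w d where r2: "strict_mono r2" and lv: "((\<lambda>n. T (ys n)) \<circ> r2) \<longlonglongrightarrow> v"
        and lw: "((\<lambda>n. A (ys n)) \<circ> r2) \<longlonglongrightarrow> w"
        using subseq3[OF T A, of ys "\<lambda>n. 0" 0, OF nys z0] by blast
      define x where "x = ys \<circ> r2"
      have xr: "x = xs \<circ> (r1 \<circ> r2)" by (simp add: x_def ys_def o_assoc)
      have r12: "strict_mono (r1 \<circ> r2)" using r1 r2 by (rule strict_mono_o)
      have nx: "\<And>n. norm (x n) \<le> 1" using nxs by (simp add: xr)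
      have lv': "(\<lambda>n. T (x n)) \<longlonglongrightarrow> v" using lv by (simp add: x_def comp_def)
      have lw': "(\<lambda>n. A (x n)) \<longlonglongrightarrow> w" using lw by (simp add: x_def comp_def)
      have ll: "(\<lambda>n. s (A (x n)) (T (x n))) \<longlonglongrightarrow> l"
        using LIMSEQ_subseq_LIMSEQ[OF l1 r2] by (simp add: x_def ys_def comp_def)
      have lnT': "(\<lambda>n. norm (T (x n))) \<longlonglongrightarrow> norm T"
        using LIMSEQ_subseq_LIMSEQ[OF lnT r12] by (simp add: xr comp_def)
      obtain z where z: "norm z \<le> 1" "A z = w" "T z = v" using weak_limit[OF refl nx lw' lv'] by blast
      have "(\<lambda>n. norm (T (x n))) \<longlonglongrightarrow> norm v" by (rule tendsto_norm[OF lv'])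
      hence nv: "norm v = norm T" using lnT' LIMSEQ_unique by blast
      hence "norm z = 1" using unit_of_attain[OF z(1) _ T0] z(3) by simp
      hence "z \<in> norm_attain_set T" using nv z(3) by (simp add: in_attain)
      hence zz: "z = x0 \<or> z = -x0" using MT by simp
      define g where "g n u = s u (T (x n)) / norm (T (x n))" for n u
      have ga: "g n (u + u') = g n u + g n u'" for n u u'
        unfolding g_def using sip_props(1)[OF s] by (simp add: add_divide_distrib)
      have gs: "g n (c *\<^sub>R u) = c * g n u" for n c u
        unfolding g_def using sip_props(2)[OF s] by simp
      have gb: "\<bar>g n u\<bar> \<le> norm u" for n u
      proof (cases "T (x n) = 0")
        case True thus ?thesis by (simp add: g_def)
      next
        case False
        have "\<bar>s u (T (x n))\<bar> \<le> norm u * norm (T (x n))" by (rule sip_cs[OF s])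
        thus ?thesis using False by (simp add: g_def abs_div divide_le_eq)
      qed
      have gy: "g n (T (x n)) = norm (T (x n))" for n
        unfolding g_def using sip_props(4)[OF s] by (simp add: power2_eq_square)
      have gneg: "g n (- u) = - g n u" for n u using gs[of n "-1" u] by simp
      have sg: "s (A (x n)) (T (x n)) / norm (T (x n)) = g n (A (x n))" for n by (simp add: g_def)
      have lg: "(\<lambda>n. g n (A (x n))) \<longlonglongrightarrow> l / norm T"
        using tendsto_divide[OF ll lnT'] nT by (simp add: sg)
      show "l = 0"
      proof (cases "z = x0")
        case True
        have "l / norm T = f0 w"
        proof (rule ycl[OF uniq f0, of g "\<lambda>n. T (x n)"])
          show "\<And>n u v. g n (u + v) = g n u + g n v" by (rule ga)
          show "\<And>n c u. g n (c *\<^sub>R u) = c * g n u" by (rule gs)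
          show "\<And>n u. \<bar>g n u\<bar> \<le> norm u" by (rule gb)
          show "\<And>n. g n (T (x n)) = norm (T (x n))" by (rule gy)
          show "(\<lambda>n. T (x n)) \<longlonglongrightarrow> T x0" using lv' z(3) True by simp
          show "(\<lambda>n. A (x n)) \<longlonglongrightarrow> w" by (rule lw')
          show "(\<lambda>n. g n (A (x n))) \<longlonglongrightarrow> l / norm T" by (rule lg)
        qed
        hence "l / norm T = 0" using True z(2) fA by simp
        thus ?thesis using nT by simp
      next
        case False
        hence zx: "z = -x0" using zz by simp
        have "- (l / norm T) = f0 w"
        proof (rule ycl[OF uniq f0, of "\<lambda>n u. - g n u" "\<lambda>n. - T (x n)"])
          show "\<And>n u v. - g n (u + v) = - g n u + - g n v" using ga by simp
          show "\<And>n c u. - g n (c *\<^sub>R u) = c * - g n u" using gs by simp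
          show "\<And>n u. \<bar>- g n u\<bar> \<le> norm u" using gb by simp
          show "\<And>n. - g n (- T (x n)) = norm (- T (x n))" using gy gneg by simp
          have "(\<lambda>n. - T (x n)) \<longlonglongrightarrow> - v" by (intro tendsto_intros lv')
          moreover have mv: "- v = T x0" using zx z(3) by (auto simp: blinfun.minus_right)
          ultimately show "(\<lambda>n. - T (x n)) \<longlonglongrightarrow> T x0" by (simp only: mv)
          show "(\<lambda>n. A (x n)) \<longlonglongrightarrow> w" by (rule lw')
          show "(\<lambda>n. - g n (A (x n))) \<longlonglongrightarrow> - (l / norm T)" by (intro tendsto_intros lg)
        qed
        moreover have "w = - A x0" using zx z(2) by (simp add: blinfun.minus_right)
        ultimately have "l / norm T = 0" using is_supp_lin(3)[OF f0] fA by simp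
        thus ?thesis using nT by simp
      qed
    qed
  next
    assume C: "\<forall>s xs l. compatible_sip s \<longrightarrow> norming_seq T xs \<longrightarrow>
                 subseq_limit (\<lambda>n. s (A (xs n)) (T (xs n))) l \<longrightarrow> l = 0"
    obtain s :: "'b \<Rightarrow> 'b \<Rightarrow> real" where s: "compatible_sip s" "\<And>u. s u (T x0) = norm (T x0) * f0 u"
      using sip_exists[OF y0 f0] by blast
    have "s (A x0) (T x0) = 0" by (rule const_cond[OF C x0 s(1)])
    hence fA: "f0 (A x0) = 0" using s(2) y0 by simp
    show "birkhoff_orth T A"
      by (rule orth_of_point[OF nx0(1) f0]) (use is_supp_val[OF f0] nx0 fA in simp_all)
  qed
qed



theorem theorem3p1:
  fixes T :: "'a::banach \<Rightarrow>\<^sub>L 'b::real_normed_vector"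
  assumes "reflexive_space TYPE('a)"
    and "T \<in> compact_ops" and "T \<noteq> 0"
  shows "(smooth_point_in compact_ops T \<longleftrightarrow>
           (\<exists>x0. norm x0 = 1 \<and> norm_attain_set T = {x0, -x0} \<and> smooth_point_in UNIV (T x0)))
       \<and> ((\<exists>x0. norm x0 = 1 \<and> norm_attain_set T = {x0, -x0} \<and> smooth_point_in UNIV (T x0)) \<longleftrightarrow>
           (\<forall>A\<in>compact_ops. birkhoff_orth T A \<longleftrightarrow>
              (\<forall>s xs l. compatible_sip s \<longrightarrow> norming_seq T xs \<longrightarrow>
                 subseq_limit (\<lambda>n. s (A (xs n)) (T (xs n))) l \<longrightarrow> l = 0)))"
proof (intro conjI iffI)
  assume "smooth_point_in compact_ops T"
  thus "\<exists>x0. norm x0 = 1 \<and> norm_attain_set T = {x0, -x0} \<and> smooth_point_in UNIV (T x0)"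
    by (rule i_to_ii[OF assms])
next
  assume "\<exists>x0. norm x0 = 1 \<and> norm_attain_set T = {x0, -x0} \<and> smooth_point_in UNIV (T x0)"
  then obtain x0 where "norm_attain_set T = {x0, -x0}" "smooth_point_in UNIV (T x0)" by blast
  thus "smooth_point_in compact_ops T" by (rule ii_to_i[OF assms])
next
  assume "\<exists>x0. norm x0 = 1 \<and> norm_attain_set T = {x0, -x0} \<and> smooth_point_in UNIV (T x0)"
  then obtain x0 where "norm_attain_set T = {x0, -x0}" "smooth_point_in UNIV (T x0)" by blast
  thus "\<forall>A\<in>compact_ops. birkhoff_orth T A \<longleftrightarrow>
              (\<forall>s xs l. compatible_sip s \<longrightarrow> norming_seq T xs \<longrightarrow>
                 subseq_limit (\<lambda>n. s (A (xs n)) (T (xs n))) l \<longrightarrow> l = 0)"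
    by (rule ii_to_iii[OF assms])
next
  assume "\<forall>A\<in>compact_ops. birkhoff_orth T A \<longleftrightarrow>
              (\<forall>s xs l. compatible_sip s \<longrightarrow> norming_seq T xs \<longrightarrow>
                 subseq_limit (\<lambda>n. s (A (xs n)) (T (xs n))) l \<longrightarrow> l = 0)"
  thus "\<exists>x0. norm x0 = 1 \<and> norm_attain_set T = {x0, -x0} \<and> smooth_point_in UNIV (T x0)"
    by (rule iii_to_ii[OF assms])
qed

end
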